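(* Let $1\le k\le n$, $p>q$, let $\phi$ be a positive smooth function on $\mathbb{S}^n$, and let $u$ be a positive smooth strictly spherical convex solution of $\sigma_k^{1/k}(b)=u^{\frac{p-1}{k}}(u^2+|\nabla u|^2)^{\frac{k+1-q}{2k}}\phi^{1/k}$, where $b=(b_{ij})=(u_{ij}+u\delta_{ij})$. Define, with $F=\sigma_k^{1/k}$ and $F^{ij}=\partial F/\partial b_{ij}$ evaluated at $b$, $$L_u(v)=F^{ij}(v_{ij}+v\delta_{ij})-\frac{p-1}{k}u^{\frac{p-1}{k}-1}\rho^{\frac{k+1-q}{k}}\phi^{\frac1k}v-\frac{k+1-q}{k}u^{\frac{p-1}{k}+1}\rho^{\frac{k+1-q}{k}-2}\phi^{\frac1k}v-\frac{k+1-q}{k}u^{\frac{p-1}{k}}\rho^{\frac{k+1-q}{k}-2}\phi^{\frac1k}\sum_l u_lv_l,$$ where $\rho=\sqrt{u^2+|\nabla u|^2}$. Then if $v\in C^2(\mathbb{S}^n)$ satisfies $L_u(v)=0$, it follows that $v\equiv0$.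
   Context: $\mathbb{S}^n$ is the round unit sphere; subscripts denote covariant derivatives in a local orthonormal frame, with summation over repeated indices. $\sigma_k$ is the $k$-th elementary symmetric polynomial of the eigenvalues of a symmetric matrix. $u$ is strictly spherical convex if $(u_{ij}+u\delta_{ij})$ is positive definite everywhere. *)

theory Defs
  imports "HOL-Analysis.Analysis"
begin

text \<open>The round unit sphere S^n is modelled as the unit sphere  sphere 0 1  in the
  Euclidean space real^'m with CARD('m) = n + 1.  Functions on S^n are given as
  real-valued functions on real^'m; regularity on S^n means regularity of the function
  on some open neighbourhood of the sphere.\<close>

fun Ck_on :: "nat \<Rightarrow> ('a::euclidean_space) set \<Rightarrow> ('a \<Rightarrow> real) \<Rightarrow> bool" where
  "Ck_on 0 S f = continuous_on S f"
| "Ck_on (Suc m) S f =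
     ((\<forall>x\<in>S. f differentiable (at x)) \<and>
      (\<forall>i\<in>Basis. Ck_on m S (\<lambda>x. frechet_derivative f (at x) i)))"

definition smooth_on :: "('a::euclidean_space) set \<Rightarrow> ('a \<Rightarrow> real) \<Rightarrow> bool" where
  "smooth_on S f \<longleftrightarrow> (\<forall>m. Ck_on m S f)"

definition Ck_sphere :: "nat \<Rightarrow> ('a::euclidean_space \<Rightarrow> real) \<Rightarrow> bool" where
  "Ck_sphere m f \<longleftrightarrow> (\<exists>S. open S \<and> sphere 0 1 \<subseteq> S \<and> Ck_on m S f)"

definition smooth_sphere :: "('a::euclidean_space \<Rightarrow> real) \<Rightarrow> bool" where
  "smooth_sphere f \<longleftrightarrow> (\<exists>S. open S \<and> sphere 0 1 \<subseteq> S \<and> smooth_on S f)"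

definition egrad :: "(real^'m \<Rightarrow> real) \<Rightarrow> real^'m \<Rightarrow> real^'m" where
  "egrad f x = (\<chi> i. frechet_derivative f (at x) (axis i 1))"

definition ehess :: "(real^'m \<Rightarrow> real) \<Rightarrow> real^'m \<Rightarrow> real^'m^'m" where
  "ehess f x = (\<chi> i j. frechet_derivative (\<lambda>y. frechet_derivative f (at y) (axis j 1)) (at x) (axis i 1))"

definition tproj :: "real^'m \<Rightarrow> real^'m^'m" where
  "tproj x = mat 1 - (\<chi> i j. x $ i * x $ j)"

definition sgrad :: "(real^'m \<Rightarrow> real) \<Rightarrow> real^'m \<Rightarrow> real^'m" where
  "sgrad f x = egrad f x - (egrad f x \<bullet> x) *\<^sub>R x"

text \<open>Spherical covariant Hessian (f_ij), as the matrix of the bilinear form on T_x,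
  extended by 0 on the normal direction:  Hess_S f(X,Y) = D^2 f(X,Y) - (Df . x)(X . Y).\<close>
definition shess :: "(real^'m \<Rightarrow> real) \<Rightarrow> real^'m \<Rightarrow> real^'m^'m" where
  "shess f x = tproj x ** (ehess f x - (egrad f x \<bullet> x) *\<^sub>R mat 1) ** tproj x"

definition bmat :: "(real^'m \<Rightarrow> real) \<Rightarrow> real^'m \<Rightarrow> real^'m^'m" where
  "bmat f x = shess f x + f x *\<^sub>R tproj x"

definition tan_eigenvalues :: "real^'m \<Rightarrow> real^'m^'m \<Rightarrow> (nat \<Rightarrow> real) \<Rightarrow> bool" where
  "tan_eigenvalues x B lam \<longleftrightarrow>
     (\<exists>e::nat \<Rightarrow> real^'m.
        (\<forall>i < CARD('m) - 1. e i \<bullet> x = 0 \<and> B *v e i = lam i *\<^sub>R e i) \<and>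
        (\<forall>i < CARD('m) - 1. \<forall>j < CARD('m) - 1. e i \<bullet> e j = (if i = j then 1 else 0)))"

definition esym :: "nat \<Rightarrow> nat \<Rightarrow> (nat \<Rightarrow> real) \<Rightarrow> real" where
  "esym k n lam = (\<Sum>S \<in> {S. S \<subseteq> {..<n} \<and> card S = k}. \<Prod>i\<in>S. lam i)"

definition sigma_tan :: "nat \<Rightarrow> real^'m \<Rightarrow> real^'m^'m \<Rightarrow> real" where
  "sigma_tan k x B = (THE s. \<exists>lam. tan_eigenvalues x B lam \<and> s = esym k (CARD('m) - 1) lam)"

definition Fk :: "nat \<Rightarrow> real^'m \<Rightarrow> real^'m^'m \<Rightarrow> real" where
  "Fk k x B = sigma_tan k x B powr (1 / real k)"

text \<open>F^{ij}(B) W_ij: derivative of F at B in the (symmetric) direction W.\<close>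
definition Flin :: "nat \<Rightarrow> real^'m \<Rightarrow> real^'m^'m \<Rightarrow> real^'m^'m \<Rightarrow> real" where
  "Flin k x B W = deriv (\<lambda>t. Fk k x (B + t *\<^sub>R W)) 0"

definition strictly_sph_convex :: "(real^'m \<Rightarrow> real) \<Rightarrow> bool" where
  "strictly_sph_convex u \<longleftrightarrow>
     (\<forall>x \<in> sphere 0 1. \<forall>y. y \<bullet> x = 0 \<and> y \<noteq> 0 \<longrightarrow> y \<bullet> (bmat u x *v y) > 0)"

definition rho :: "(real^'m \<Rightarrow> real) \<Rightarrow> real^'m \<Rightarrow> real" where
  "rho u x = sqrt ((u x)\<^sup>2 + (norm (sgrad u x))\<^sup>2)"

definition Lop :: "nat \<Rightarrow> real \<Rightarrow> real \<Rightarrow> (real^'m \<Rightarrow> real) \<Rightarrow> (real^'m \<Rightarrow> real)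
                     \<Rightarrow> (real^'m \<Rightarrow> real) \<Rightarrow> real^'m \<Rightarrow> real" where
  "Lop k p q \<phi> u v x =
     Flin k x (bmat u x) (bmat v x)
     - ((p - 1) / k) * u x powr ((p - 1) / k - 1) * rho u x powr ((k + 1 - q) / k)
         * \<phi> x powr (1 / k) * v x
     - ((k + 1 - q) / k) * u x powr ((p - 1) / k + 1) * rho u x powr ((k + 1 - q) / k - 2)
         * \<phi> x powr (1 / k) * v x
     - ((k + 1 - q) / k) * u x powr ((p - 1) / k) * rho u x powr ((k + 1 - q) / k - 2)
         * \<phi> x powr (1 / k) * (sgrad u x \<bullet> sgrad v x)"

end

theory Submission
  imports Defs
begin

fun Phi :: "nat \<Rightarrow> (nat \<Rightarrow> real) \<Rightarrow> real" where
  "Phi 0 p = 1"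
| "Phi (Suc m) p = (\<Sum>i\<le>m. (-1)^(m-i) * Phi i p * p (Suc m - i)) / real (Suc m)"

lemma esym_0 [simp]: "esym 0 n lam = 1"
proof -
  have "{S. S \<subseteq> {..<n} \<and> card S = 0} = {{}}"
    using finite_subset[of _ "{..<n}"] by fastforce
  then show ?thesis by (simp add: esym_def)
qed

lemma esym_Suc_0 [simp]: "esym (Suc k) 0 lam = 0"
proof -
  have "{S. S \<subseteq> {..<0::nat} \<and> card S = Suc k} = {}" by auto
  then show ?thesis by (simp add: esym_def)
qed

lemma esym_Suc_Suc:
  "esym (Suc k) (Suc n) lam = esym (Suc k) n lam + lam n * esym k n lam"
proof -
  let ?A = "{S. S \<subseteq> {..<n} \<and> card S = Suc k}"
  let ?B = "{S. S \<subseteq> {..<n} \<and> card S = k}"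
  have eq: "{S. S \<subseteq> {..<Suc n} \<and> card S = Suc k} = ?A \<union> insert n ` ?B"
  proof (rule set_eqI, rule iffI)
    fix S assume "S \<in> {S. S \<subseteq> {..<Suc n} \<and> card S = Suc k}"
    then have S: "S \<subseteq> {..<Suc n}" "card S = Suc k" by auto
    have fS: "finite S" using S(1) finite_subset by blast
    show "S \<in> ?A \<union> insert n ` ?B"
    proof (cases "n \<in> S")
      case True
      have "S - {n} \<in> ?B" using S True fS by auto
      moreover have "S = insert n (S - {n})" using True by auto
      ultimately show ?thesis by blast
    next
      case False
      then have "S \<subseteq> {..<n}" using S(1) by (auto simp: less_Suc_eq)
      then show ?thesis using S by auto
    qed
  next
    fix S assume "S \<in> ?A \<union> insert n ` ?B"
    then show "S \<in> {S. S \<subseteq> {..<Suc n} \<and> card S = Suc k}"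
    proof
      assume "S \<in> ?A" then show ?thesis by auto
    next
      assume "S \<in> insert n ` ?B"
      then obtain T where T: "T \<subseteq> {..<n}" "card T = k" "S = insert n T" by auto
      have "finite T" using T(1) finite_subset by blast
      moreover have "n \<notin> T" using T(1) by auto
      ultimately show ?thesis using T by auto
    qed
  qed
  have disj: "?A \<inter> insert n ` ?B = {}" by auto
  have fA: "finite ?A" by (rule finite_subset[of _ "Pow {..<n}"]) auto
  have fB: "finite ?B" by (rule finite_subset[of _ "Pow {..<n}"]) auto
  have inj: "inj_on (insert n) ?B"
    unfolding inj_on_def by (metis (mono_tags, lifting) insert_ident lessThan_iff mem_Collect_eq order_less_irrefl subsetD)
  have "(\<Sum>S\<in>insert n ` ?B. \<Prod>i\<in>S. lam i) = (\<Sum>T\<in>?B. \<Prod>i\<in>insert n T. lam i)"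
    using inj by (simp add: sum.reindex)
  also have "\<dots> = (\<Sum>T\<in>?B. lam n * (\<Prod>i\<in>T. lam i))"
  proof (rule sum.cong[OF refl])
    fix T assume "T \<in> ?B"
    then have "finite T" "n \<notin> T" using finite_subset by auto
    then show "(\<Prod>i\<in>insert n T. lam i) = lam n * (\<Prod>i\<in>T. lam i)" by simp
  qed
  also have "\<dots> = lam n * esym k n lam" by (simp add: esym_def sum_distrib_left)
  finally have "(\<Sum>S\<in>insert n ` ?B. \<Prod>i\<in>S. lam i) = lam n * esym k n lam" .
  then show ?thesis
    unfolding esym_def eq using fA fB disj by (simp add: sum.union_disjoint)
qed

lemma esym_alt:
  fixes a :: real
  assumes that: "a = lam n"
  shows "(\<Sum>i\<le>K. (-a)^(K-i) * esym i (Suc n) lam) = esym K n lam"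
proof (induction K)
  case 0 then show ?case by simp
next
  case (Suc K)
  have "(\<Sum>i\<le>Suc K. (-a)^(Suc K-i) * esym i (Suc n) lam)
      = (\<Sum>i\<le>K. (-a)^(Suc K-i) * esym i (Suc n) lam) + esym (Suc K) (Suc n) lam"
    by (simp add: sum.atMost_Suc)
  also have "(\<Sum>i\<le>K. (-a)^(Suc K-i) * esym i (Suc n) lam)
      = (-a) * (\<Sum>i\<le>K. (-a)^(K-i) * esym i (Suc n) lam)"
    unfolding sum_distrib_left by (rule sum.cong) (auto simp: Suc_diff_le)
  also have "(-a) * (\<Sum>i\<le>K. (-a)^(K-i) * esym i (Suc n) lam) + esym (Suc K) (Suc n) lam
      = esym (Suc K) n lam" using Suc that by (simp add: esym_Suc_Suc)
  finally show ?case .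
qed

definition psum :: "nat \<Rightarrow> (nat \<Rightarrow> real) \<Rightarrow> nat \<Rightarrow> real" where
  "psum n lam j = (\<Sum>l<n. lam l ^ j)"

lemma newton:
  "real (Suc k) * esym (Suc k) n lam
     = (\<Sum>i\<le>k. (-1)^(k-i) * esym i n lam * psum n lam (Suc k - i))"
proof (induction n arbitrary: k)
  case 0 then show ?case by (simp add: psum_def)
next
  case (Suc n)
  let ?a = "lam n"
  let ?E = "\<lambda>i. esym i n lam" and ?E' = "\<lambda>i. esym i (Suc n) lam"
  let ?p = "psum n lam"
  have p': "\<And>j. psum (Suc n) lam j = ?p j + ?a ^ j" by (simp add: psum_def)
  have S2: "(\<Sum>i\<le>k. (-1)^(k-i) * ?E' i * ?a ^ (Suc k - i)) = ?a * ?E k"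
  proof -
    have "(\<Sum>i\<le>k. (-1)^(k-i) * ?E' i * ?a ^ (Suc k - i))
        = ?a * (\<Sum>i\<le>k. (-?a)^(k-i) * ?E' i)"
      unfolding sum_distrib_left
    proof (rule sum.cong[OF refl])
      fix i assume "i \<in> {..k}"
      then have "Suc k - i = Suc (k - i)" by auto
      moreover have "(-?a)^(k-i) = (-1)^(k-i) * ?a^(k-i)" by (rule power_minus)
      ultimately show "(-1)^(k-i) * ?E' i * ?a ^ (Suc k - i) = ?a * ((-?a)^(k-i) * ?E' i)"
        by (simp only: power_Suc mult_ac)
    qed
    then show ?thesis using esym_alt[of ?a lam n k] by simp
  qed
  have S1: "(\<Sum>i\<le>k. (-1)^(k-i) * ?E' i * ?p (Suc k - i))
      = real (Suc k) * ?E (Suc k) + ?a * (real k * ?E k)"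
  proof (cases k)
    case 0 then show ?thesis using Suc.IH[of 0] by simp
  next
    case (Suc k')
    have split: "(\<Sum>i\<le>k. (-1)^(k-i) * ?E' i * ?p (Suc k - i))
       = (\<Sum>i\<le>k. (-1)^(k-i) * ?E i * ?p (Suc k - i))
         + ?a * (\<Sum>i\<le>k'. (-1)^(k'-i) * ?E i * ?p (Suc k' - i))"
    proof -
      have "(\<Sum>i\<le>k. (-1)^(k-i) * ?E' i * ?p (Suc k - i))
          = (-1)^k * ?E' 0 * ?p (Suc k) + (\<Sum>i\<le>k'. (-1)^(k-Suc i) * ?E' (Suc i) * ?p (Suc k - Suc i))"
        unfolding Suc by (simp only: sum.atMost_Suc_shift diff_zero)
      also have "\<dots> = (-1)^k * ?E 0 * ?p (Suc k) + (\<Sum>i\<le>k'. (-1)^(k-Suc i) * ?E (Suc i) * ?p (Suc k - Suc i))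
           + ?a * (\<Sum>i\<le>k'. (-1)^(k'-i) * ?E i * ?p (Suc k' - i))"
      proof -
        have "(\<Sum>i\<le>k'. (-1)^(k-Suc i) * ?E' (Suc i) * ?p (Suc k - Suc i))
           = (\<Sum>i\<le>k'. (-1)^(k-Suc i) * ?E (Suc i) * ?p (Suc k - Suc i)
                + ?a * ((-1)^(k'-i) * ?E i * ?p (Suc k' - i)))"
          by (rule sum.cong[OF refl]) (simp add: esym_Suc_Suc Suc distrib_left distrib_right mult_ac)
        then show ?thesis by (simp add: sum.distrib sum_distrib_left)
      qed
      also have "(-1)^k * ?E 0 * ?p (Suc k) + (\<Sum>i\<le>k'. (-1)^(k-Suc i) * ?E (Suc i) * ?p (Suc k - Suc i))
          = (\<Sum>i\<le>k. (-1)^(k-i) * ?E i * ?p (Suc k - i))"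
        unfolding Suc by (simp only: sum.atMost_Suc_shift diff_zero)
      finally show ?thesis .
    qed
    show ?thesis unfolding split Suc.IH[of k', symmetric] Suc.IH[of k, symmetric]
      using Suc by simp
  qed
  have "(\<Sum>i\<le>k. (-1)^(k-i) * ?E' i * psum (Suc n) lam (Suc k - i))
      = (\<Sum>i\<le>k. (-1)^(k-i) * ?E' i * ?p (Suc k - i)) + (\<Sum>i\<le>k. (-1)^(k-i) * ?E' i * ?a ^ (Suc k - i))"
    unfolding p' by (simp add: distrib_left sum.distrib)
  also have "\<dots> = real (Suc k) * (?E (Suc k) + ?a * ?E k)"
    unfolding S1 S2 of_nat_Suc by (simp only: ring_distribs mult_1 mult_1_right add_ac mult_ac)
  finally show ?case by (simp add: esym_Suc_Suc)
qed

lemma esym_Phi: "esym k n lam = Phi k (psum n lam)"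
proof (induction k rule: less_induct)
  case (less k)
  show ?case
  proof (cases k)
    case 0 then show ?thesis by simp
  next
    case (Suc m)
    have "real (Suc m) * esym (Suc m) n lam = (\<Sum>i\<le>m. (-1)^(m-i) * Phi i (psum n lam) * psum n lam (Suc m - i))"
      unfolding newton using less Suc by (intro sum.cong) auto
    then have "esym (Suc m) n lam = (\<Sum>i\<le>m. (-1)^(m-i) * Phi i (psum n lam) * psum n lam (Suc m - i)) / real (Suc m)"
      by (metis nonzero_mult_div_cancel_left of_nat_0_eq_iff nat.simps(3))
    then show ?thesis unfolding Suc by simp
  qed
qed

lemma Phi_cong: "(\<And>j. j > 0 \<Longrightarrow> p j = q j) \<Longrightarrow> Phi m p = Phi m q"
proof (induction m rule: less_induct)
  case (less m)
  show ?case
  proof (cases m)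
    case 0 then show ?thesis by simp
  next
    case (Suc k)
    have "(\<Sum>i\<le>k. (-1)^(k-i) * Phi i p * p (Suc k - i)) = (\<Sum>i\<le>k. (-1)^(k-i) * Phi i q * q (Suc k - i))"
      using less Suc by (intro sum.cong) auto
    then show ?thesis using Suc by simp
  qed
qed

fun dPhi :: "nat \<Rightarrow> (nat \<Rightarrow> real) \<Rightarrow> (nat \<Rightarrow> real) \<Rightarrow> real" where
  "dPhi 0 a b = 0"
| "dPhi (Suc m) a b = (\<Sum>i\<le>m. (-1)^(m-i) * (dPhi i a b * a (Suc m - i) + Phi i a * b (Suc m - i))) / real (Suc m)"

lemma Phi_deriv:
  fixes P :: "nat \<Rightarrow> real \<Rightarrow> real"
  assumes d: "\<And>j. j > 0 \<Longrightarrow> (P j has_real_derivative b j) (at 0)"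
    and v: "\<And>j. j > 0 \<Longrightarrow> P j 0 = a j"
  shows "((\<lambda>t. Phi m (\<lambda>j. P j t)) has_real_derivative dPhi m a b) (at 0)"
proof (induction m rule: less_induct)
  case (less m)
  show ?case
  proof (cases m)
    case 0 then show ?thesis by simp
  next
    case (Suc k)
    have pv: "Phi i (\<lambda>j. P j 0) = Phi i a" for i by (rule Phi_cong) (simp add: v)
    have "((\<lambda>t. (\<Sum>i\<le>k. (-1)^(k-i) * Phi i (\<lambda>j. P j t) * P (Suc k - i) t)) has_real_derivative
          (\<Sum>i\<le>k. (-1)^(k-i) * (dPhi i a b * a (Suc k - i) + Phi i a * b (Suc k - i)))) (at 0)"
    proof (rule DERIV_sum)
      fix i assume i: "i \<in> {..k}"
      have "((\<lambda>t. Phi i (\<lambda>j. P j t) * P (Suc k - i) t) has_real_derivative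
           (dPhi i a b * P (Suc k - i) 0 + Phi i (\<lambda>j. P j 0) * b (Suc k - i))) (at 0)"
      proof -
        have h1: "((\<lambda>t. Phi i (\<lambda>j. P j t)) has_real_derivative dPhi i a b) (at 0)"
          using less[of i] i Suc by auto
        have h2: "(P (Suc k - i) has_real_derivative b (Suc k - i)) (at 0)"
          using d[of "Suc k - i"] i by auto
        show ?thesis using DERIV_mult[OF h1 h2] by (simp add: mult.commute)
      qed
      then have hd: "((\<lambda>t. Phi i (\<lambda>j. P j t) * P (Suc k - i) t) has_real_derivative
           (dPhi i a b * a (Suc k - i) + Phi i a * b (Suc k - i))) (at 0)"
        using i v[of "Suc k - i"] pv by auto
      show "((\<lambda>t. (-1)^(k-i) * Phi i (\<lambda>j. P j t) * P (Suc k - i) t) has_real_derivative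
          (-1)^(k-i) * (dPhi i a b * a (Suc k - i) + Phi i a * b (Suc k - i))) (at 0)"
        using DERIV_cmult[OF hd, where c="(-1)^(k-i)"] by (simp add: mult.assoc)
    qed
    then have "((\<lambda>t. (\<Sum>i\<le>k. (-1)^(k-i) * Phi i (\<lambda>j. P j t) * P (Suc k - i) t) / real (Suc k)) has_real_derivative
          (\<Sum>i\<le>k. (-1)^(k-i) * (dPhi i a b * a (Suc k - i) + Phi i a * b (Suc k - i))) / real (Suc k)) (at 0)"
      by (rule DERIV_cdivide)
    then show ?thesis using Suc by simp
  qed
qed

lemma quad_nonpos_lin_zero:
  fixes c D :: real
  assumes "\<And>t. 2 * t * c + t^2 * D \<le> 0"
  shows "c = 0"
proof -
  obtain A where A: "A = \<bar>D\<bar> + 1" by blast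
  have pos: "A > 0" using A by simp
  have pos2: "2 * A + D > 0" using A by linarith
  define t where "t = c / A"
  have "2 * t * c + t^2 * D = c^2 * (2 * A + D) / A^2"
    unfolding t_def using pos by (simp add: field_simps power2_eq_square)
  then have "c^2 * (2 * A + D) / A^2 \<le> 0" using assms by metis
  then have "c^2 * (2 * A + D) \<le> 0" using pos by (simp add: divide_le_0_iff)
  then have "c^2 \<le> 0" using pos2 by (simp add: mult_le_0_iff)
  then show ?thesis by simp
qed

lemma sym_inner:
  fixes M :: "real^'m^'m"
  assumes "transpose M = M"
  shows "y \<bullet> (M *v z) = (M *v y) \<bullet> z"
  by (metis assms dot_lmul_matrix inner_commute transpose_transpose vector_transpose_matrix)

lemma spectral_sub:
  fixes M :: "real^'m^'m"
  assumes sym: "transpose M = M"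
  shows "subspace V \<Longrightarrow> (\<forall>y\<in>V. M *v y \<in> V) \<Longrightarrow> dim V = d \<Longrightarrow>
    \<exists>e::nat \<Rightarrow> real^'m. (\<forall>i<d. e i \<in> V \<and> M *v e i = (e i \<bullet> (M *v e i)) *\<^sub>R e i) \<and>
        (\<forall>i<d. \<forall>j<d. e i \<bullet> e j = (if i = j then 1 else 0))"
proof (induction d arbitrary: V)
  case 0 then show ?case by auto
next
  case (Suc d)
  note V = Suc.prems
  let ?q = "\<lambda>y. y \<bullet> (M *v y)"
  let ?K = "V \<inter> sphere 0 1"
  have "\<not> V \<subseteq> {0}" using V(3) dim_eq_0 by (metis nat.simps(3))
  then obtain v where v: "v \<in> V" "v \<noteq> 0" by auto
  have "v /\<^sub>R norm v \<in> ?K" using v V(1) by (auto simp: subspace_scale)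
  then have Kne: "?K \<noteq> {}" by blast
  have Kc: "compact ?K" using closed_subspace[OF V(1)] by (simp add: closed_Int_compact)
  have qc: "continuous_on ?K ?q"
    by (intro continuous_intros linear_continuous_on matrix_vector_mul_linear) 
  obtain y0 where y0: "y0 \<in> ?K" "\<And>y. y \<in> ?K \<Longrightarrow> ?q y \<le> ?q y0"
    using continuous_attains_sup[OF Kc Kne qc] by blast
  define \<mu> where "\<mu> = ?q y0"
  have y0V: "y0 \<in> V" and ny0: "norm y0 = 1" using y0(1) by auto
  have yy: "y0 \<bullet> y0 = 1" by (metis ny0 power2_norm_eq_inner power_one)
  have qle: "?q y \<le> \<mu> * (y \<bullet> y)" if "y \<in> V" for y
  proof (cases "y = 0")
    case True then show ?thesis by simp
  next
    case False
    have "y /\<^sub>R norm y \<in> ?K" using that False V(1) by (auto simp: subspace_scale)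
    then have "?q (y /\<^sub>R norm y) \<le> \<mu>" using y0(2) \<mu>_def by blast
    then have "?q y / (norm y)^2 \<le> \<mu>"
      by (simp add: matrix_vector_mult_scaleR inner_commute power2_eq_square divide_inverse mult_ac)
    then have "?q y \<le> \<mu> * (norm y)^2" using False by (simp add: divide_le_eq)
    then show ?thesis by (simp add: power2_norm_eq_inner)
  qed
  have orth: "z \<bullet> (M *v y0 - \<mu> *\<^sub>R y0) = 0" if z: "z \<in> V" for z
  proof (rule quad_nonpos_lin_zero)
    fix t :: real
    have "y0 + t *\<^sub>R z \<in> V" using y0V z V(1) by (simp add: subspace_add subspace_scale)
    then have h: "?q (y0 + t *\<^sub>R z) \<le> \<mu> * ((y0 + t *\<^sub>R z) \<bullet> (y0 + t *\<^sub>R z))" by (rule qle)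
    have e1: "?q (y0 + t *\<^sub>R z) = \<mu> + 2 * t * (z \<bullet> (M *v y0)) + t^2 * ?q z"
      using sym_inner[OF sym, of y0 z] unfolding \<mu>_def
      by (simp add: matrix_vector_right_distrib matrix_vector_mult_scaleR inner_add_left inner_add_right
          inner_commute power2_eq_square algebra_simps)
    have e2: "(y0 + t *\<^sub>R z) \<bullet> (y0 + t *\<^sub>R z) = 1 + 2 * t * (z \<bullet> y0) + t^2 * (z \<bullet> z)"
      using yy by (simp add: inner_add_left inner_add_right inner_commute power2_eq_square
          algebra_simps)
    show "2 * t * (z \<bullet> (M *v y0 - \<mu> *\<^sub>R y0)) + t^2 * (?q z - \<mu> * (z \<bullet> z)) \<le> 0"
      using h unfolding e1 e2 by (simp add: inner_diff_right algebra_simps)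
  qed
  have My0V: "M *v y0 - \<mu> *\<^sub>R y0 \<in> V" using V y0V by (simp add: subspace_diff subspace_scale)
  have eig: "M *v y0 = \<mu> *\<^sub>R y0" using orth[OF My0V] by simp
  define V' where "V' = {y \<in> V. y \<bullet> y0 = 0}"
  have sV': "subspace V'" using V(1) unfolding V'_def subspace_def
    by (auto simp: inner_add_left)
  have iV': "\<forall>y\<in>V'. M *v y \<in> V'"
  proof
    fix y assume "y \<in> V'"
    then have "y \<in> V" "y \<bullet> y0 = 0" by (auto simp: V'_def)
    moreover have "(M *v y) \<bullet> y0 = y \<bullet> (M *v y0)" using sym_inner[OF sym, of y y0] by simp
    ultimately show "M *v y \<in> V'" using V(2) eig by (simp add: V'_def)
  qed
  have y0n: "y0 \<notin> span V'"
  proof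
    assume "y0 \<in> span V'"
    then have "y0 \<in> V'" using sV' by (metis span_eq_iff)
    then have "y0 \<bullet> y0 = 0" by (simp add: V'_def)
    then show False using ny0 by simp
  qed
  have spanV: "span (insert y0 V') = V"
  proof (rule span_subspace)
    show "insert y0 V' \<subseteq> V" using y0V by (auto simp: V'_def)
    show "subspace V" by (rule V(1))
    show "V \<subseteq> span (insert y0 V')"
    proof
      fix w assume w: "w \<in> V"
      have "w - (w \<bullet> y0) *\<^sub>R y0 \<in> V'"
        using w y0V V(1) yy by (simp add: V'_def subspace_diff subspace_scale inner_diff_left)
      then have "w - (w \<bullet> y0) *\<^sub>R y0 \<in> span (insert y0 V')" by (simp add: span_base)
      moreover have "(w \<bullet> y0) *\<^sub>R y0 \<in> span (insert y0 V')" by (simp add: span_base span_scale)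
      ultimately have "(w - (w \<bullet> y0) *\<^sub>R y0) + (w \<bullet> y0) *\<^sub>R y0 \<in> span (insert y0 V')"
        by (rule span_add)
      then show "w \<in> span (insert y0 V')" by simp
    qed
  qed
  have "dim V = dim V' + 1"
    using dim_insert[of y0 V'] y0n spanV by (metis dim_span)
  then have dV': "dim V' = d" using V(3) by simp
  obtain e' where e': "\<forall>i<d. e' i \<in> V' \<and> M *v e' i = (e' i \<bullet> (M *v e' i)) *\<^sub>R e' i"
     "\<forall>i<d. \<forall>j<d. e' i \<bullet> e' j = (if i = j then 1 else 0)"
    using Suc.IH[OF sV' iV' dV'] by blast
  define e where "e i = (if i = 0 then y0 else e' (i - 1))" for i
  have "\<forall>i<Suc d. e i \<in> V \<and> M *v e i = (e i \<bullet> (M *v e i)) *\<^sub>R e i"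
  proof (intro allI impI)
    fix i assume i: "i < Suc d"
    show "e i \<in> V \<and> M *v e i = (e i \<bullet> (M *v e i)) *\<^sub>R e i"
    proof (cases "i = 0")
      case True
      have "y0 \<bullet> (M *v y0) = \<mu>" by (simp add: \<mu>_def)
      then show ?thesis using True y0V eig by (simp add: e_def)
    next
      case False
      then show ?thesis using e'(1) i by (auto simp: e_def V'_def)
    qed
  qed
  moreover have "\<forall>i<Suc d. \<forall>j<Suc d. e i \<bullet> e j = (if i = j then 1 else 0)"
  proof (intro allI impI)
    fix i j assume ij: "i < Suc d" "j < Suc d"
    have o1: "e' l \<bullet> y0 = 0" if "l < d" for l using e'(1) that by (auto simp: V'_def)
    show "e i \<bullet> e j = (if i = j then 1 else 0)"
      using ij o1[of "i - 1"] o1[of "j - 1"] e'(2)[rule_format, of "i - 1" "j - 1"] ny0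
      by (cases "i = 0"; cases "j = 0") (auto simp: e_def inner_commute dot_square_norm)
  qed
  ultimately show ?case by blast
qed

lemma tan_eig_exists:
  fixes M :: "real^'m^'m" and x :: "real^'m"
  assumes sym: "transpose M = M" and Mx: "M *v x = 0" and nx: "norm x = 1"
  shows "\<exists>e::nat \<Rightarrow> real^'m. (\<forall>i < CARD('m) - 1. e i \<bullet> x = 0 \<and> M *v e i = (e i \<bullet> (M *v e i)) *\<^sub>R e i) \<and>
        (\<forall>i < CARD('m) - 1. \<forall>j < CARD('m) - 1. e i \<bullet> e j = (if i = j then 1 else 0))"
proof -
  let ?V = "{y. x \<bullet> y = 0}"
  have x0: "x \<noteq> 0" using nx by auto
  have s: "subspace ?V" by (rule subspace_hyperplane)
  have i: "\<forall>y\<in>?V. M *v y \<in> ?V"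
    using sym_inner[OF sym, of x] Mx by (simp add: inner_commute)
  have d: "dim ?V = CARD('m) - 1" using dim_hyperplane[OF x0] by simp
  show ?thesis using spectral_sub[OF sym s i d] by (auto simp: inner_commute)
qed

fun mpow :: "real^'m^'m \<Rightarrow> nat \<Rightarrow> real^'m^'m" where
  "mpow M 0 = mat 1"
| "mpow M (Suc j) = M ** mpow M j"

lemma matmul_scaleR_right: "(A::real^'m^'n) ** (c *\<^sub>R C) = c *\<^sub>R (A ** (C::real^'k^'m))"
  by (simp add: matrix_matrix_mult_def vec_eq_iff sum_distrib_left algebra_simps)

lemma matmul_scaleR_left: "(c *\<^sub>R A::real^'m^'n) ** C = c *\<^sub>R (A ** (C::real^'k^'m))"
  by (simp add: matrix_matrix_mult_def vec_eq_iff sum_distrib_left algebra_simps)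

lemma matrix_add_rdistrib': "((A + B) ** C) = (A ** C) + (B ** (C::real^'k^'m)::real^'k^'n)"
  by (vector matrix_matrix_mult_def sum.distrib[symmetric] field_simps)

lemma bb_matmul: "bounded_bilinear (\<lambda>(A::real^'m^'m) (C::real^'m^'m). A ** C)"
proof -
  have "bilinear (\<lambda>(A::real^'m^'m) (C::real^'m^'m). A ** C)"
    unfolding bilinear_def
    by (auto intro!: linearI simp: matrix_add_ldistrib matrix_add_rdistrib' matmul_scaleR_right matmul_scaleR_left)
  then show ?thesis by (simp add: bilinear_conv_bounded_bilinear)
qed

lemma bl_trace: "bounded_linear (trace :: real^'m^'m \<Rightarrow> real)"
proof -
  have "linear (trace :: real^'m^'m \<Rightarrow> real)"
    by (auto intro!: linearI simp: trace_def sum_distrib_left sum.distrib)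
  then show ?thesis by (simp add: linear_conv_bounded_linear)
qed

lemma mpow_eig:
  assumes "M *v v = l *\<^sub>R v"
  shows "mpow M j *v v = (l ^ j) *\<^sub>R v"
  using assms
  by (induction j) (simp_all add: matrix_vector_mul_assoc[symmetric] matrix_vector_mult_scaleR)

lemma mpow_zero_vec:
  assumes "M *v x = 0" "j > 0"
  shows "mpow M j *v x = 0"
proof -
  obtain j' where "j = Suc j'" using assms(2) gr0_implies_Suc by blast
  have "mpow M j' *v (M *v x) = 0" using assms(1) by simp
  moreover have "mpow M (Suc j') = mpow M j' ** M"
    by (induction j') (simp_all, metis matrix_mul_assoc)
  ultimately show ?thesis using \<open>j = Suc j'\<close> by (simp add: matrix_vector_mul_assoc)
qed

lemma mpow_sym:
  assumes "transpose M = M"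
  shows "transpose (mpow M j) = mpow M j"
proof (induction j)
  case 0 then show ?case by (simp add: transpose_mat)
next
  case (Suc j)
  have "mpow M j ** M = M ** mpow M j"
    by (induction j) (simp_all, metis matrix_mul_assoc)
  then show ?case using Suc assms by (simp add: matrix_transpose_mul)
qed

definition onb :: "real^'m \<Rightarrow> (nat \<Rightarrow> real^'m) \<Rightarrow> bool" where
  "onb x e \<longleftrightarrow> norm x = 1 \<and> (\<forall>i < CARD('m) - 1. e i \<bullet> x = 0) \<and>
      (\<forall>i < CARD('m) - 1. \<forall>j < CARD('m) - 1. e i \<bullet> e j = (if i = j then 1 else 0))"

lemma onb_expand:
  fixes x z :: "real^'m"
  assumes "onb x e"
  shows "z = (\<Sum>i<CARD('m) - 1. (z \<bullet> e i) *\<^sub>R e i) + (z \<bullet> x) *\<^sub>R x"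
proof (rule ccontr)
  let ?n = "CARD('m) - 1"
  have nx: "norm x = 1" and ex: "\<And>i. i < ?n \<Longrightarrow> e i \<bullet> x = 0"
    and ee: "\<And>i j. i < ?n \<Longrightarrow> j < ?n \<Longrightarrow> e i \<bullet> e j = (if i = j then 1 else 0)"
    using assms by (auto simp: onb_def)
  have xx: "x \<bullet> x = 1" by (metis nx power2_norm_eq_inner power_one)
  define w where "w = z - ((\<Sum>i<?n. (z \<bullet> e i) *\<^sub>R e i) + (z \<bullet> x) *\<^sub>R x)"
  assume "z \<noteq> (\<Sum>i<?n. (z \<bullet> e i) *\<^sub>R e i) + (z \<bullet> x) *\<^sub>R x"
  then have w0: "w \<noteq> 0" by (simp add: w_def)
  have we: "w \<bullet> e j = 0" if "j < ?n" for j
  proof -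
    have "(\<Sum>i<?n. (z \<bullet> e i) *\<^sub>R e i) \<bullet> e j = (\<Sum>i<?n. (z \<bullet> e i) * (e i \<bullet> e j))"
      by (simp add: inner_sum_left)
    also have "\<dots> = (\<Sum>i<?n. if i = j then z \<bullet> e j else 0)"
      using ee that by (intro sum.cong) auto
    also have "\<dots> = z \<bullet> e j" using that by simp
    finally have "(\<Sum>i<?n. (z \<bullet> e i) *\<^sub>R e i) \<bullet> e j = z \<bullet> e j" .
    moreover have "x \<bullet> e j = 0" using ex[OF that] by (simp add: inner_commute)
    ultimately show ?thesis
      by (simp add: w_def inner_diff_left inner_add_left)
  qed
  have wx: "w \<bullet> x = 0"
  proof -
    have "(\<Sum>i<?n. (z \<bullet> e i) *\<^sub>R e i) \<bullet> x = 0"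
      using ex by (simp add: inner_sum_left)
    then show ?thesis using xx by (simp add: w_def inner_diff_left inner_add_left)
  qed
  define S where "S = insert w (insert x (e ` {..<?n}))"
  have e0: "e i \<noteq> 0" if "i < ?n" for i using ee[OF that that] by auto
  have inj: "inj_on e {..<?n}"
  proof (rule inj_onI)
    fix i j assume "i \<in> {..<?n}" "j \<in> {..<?n}" "e i = e j"
    then show "i = j" using ee[of i j] ee[of j j] by (auto split: if_splits)
  qed
  have xne: "x \<notin> e ` {..<?n}" using ex xx by auto
  have wne: "w \<notin> insert x (e ` {..<?n})"
  proof
    assume "w \<in> insert x (e ` {..<?n})"
    then show False
    proof
      assume "w = x" then show False using wx xx by simp
    next
      assume "w \<in> e ` {..<?n}"
      then obtain i where "i < ?n" "w = e i" by auto
      then show False using we[of i] ee[of i i] by simp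
    qed
  qed
  have cardS: "card S = ?n + 2"
    using inj xne wne by (simp add: S_def card_image)
  have po: "pairwise orthogonal S"
    unfolding pairwise_def orthogonal_def S_def
    using we wx ex ee by (auto simp: inner_commute)
  have "0 \<notin> S" using w0 nx e0 by (auto simp: S_def)
  then have "independent S" using po pairwise_orthogonal_independent by blast
  then have "card S \<le> DIM(real^'m)" using independent_bound by blast
  then show False using cardS by simp
qed

lemma onb_trace:
  fixes A :: "real^'m^'m"
  assumes "onb x e"
  shows "trace A = (\<Sum>i<CARD('m) - 1. e i \<bullet> (A *v e i)) + x \<bullet> (A *v x)"
proof -
  let ?n = "CARD('m) - 1"
  define f where "f l = (if l < ?n then e l else x)" for l
  have cN: "{..<CARD('m)} = {..<Suc ?n}" by simp
  have fexp: "z = (\<Sum>l<CARD('m). (z \<bullet> f l) *\<^sub>R f l)" for z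
  proof -
    have "(\<Sum>l<CARD('m). (z \<bullet> f l) *\<^sub>R f l) = (\<Sum>l<Suc ?n. (z \<bullet> f l) *\<^sub>R f l)" by (simp only: cN)
    also have "\<dots> = (\<Sum>i<?n. (z \<bullet> f i) *\<^sub>R f i) + (z \<bullet> x) *\<^sub>R x"
      by (simp only: sum.lessThan_Suc) (simp add: f_def)
    also have "(\<Sum>i<?n. (z \<bullet> f i) *\<^sub>R f i) = (\<Sum>i<?n. (z \<bullet> e i) *\<^sub>R e i)"
      by (intro sum.cong) (auto simp: f_def)
    finally have "(\<Sum>l<CARD('m). (z \<bullet> f l) *\<^sub>R f l) = (\<Sum>i<?n. (z \<bullet> e i) *\<^sub>R e i) + (z \<bullet> x) *\<^sub>R x" .
    then show ?thesis using onb_expand[OF assms, of z] by simp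
  qed
  have delta: "(\<Sum>l<CARD('m). f l $ p * f l $ q) = (if p = q then 1 else 0)" for p q
  proof -
    have ee: "axis q (1::real) = (\<Sum>l<CARD('m). (axis q 1 \<bullet> f l) *\<^sub>R f l)" by (rule fexp)
    have "axis q (1::real) $ p = (\<Sum>l<CARD('m). (axis q 1 \<bullet> f l) * f l $ p)" 
      using arg_cong[OF ee, of "\<lambda>v. v $ p"] by (simp only: sum_component vector_scaleR_component real_scaleR_def)
    also have "\<dots> = (\<Sum>l<CARD('m). f l $ p * f l $ q)"
      by (intro sum.cong refl) (simp add: inner_axis')
    finally show ?thesis by (simp add: axis_def)
  qed
  have "(\<Sum>l<CARD('m). f l \<bullet> (A *v f l)) = (\<Sum>l<CARD('m). \<Sum>p\<in>UNIV. \<Sum>q\<in>UNIV. A$p$q * (f l $ p * f l $ q))"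
  proof (intro sum.cong refl)
    fix l
    show "f l \<bullet> (A *v f l) = (\<Sum>p\<in>UNIV. \<Sum>q\<in>UNIV. A$p$q * (f l $ p * f l $ q))"
      unfolding inner_vec_def matrix_vector_mult_def inner_real_def
      by (simp add: sum_distrib_left mult.left_commute)
  qed
  also have "\<dots> = (\<Sum>p\<in>UNIV. \<Sum>l<CARD('m). \<Sum>q\<in>UNIV. A$p$q * (f l $ p * f l $ q))"
    by (rule sum.swap)
  also have "\<dots> = (\<Sum>p\<in>UNIV. \<Sum>q\<in>UNIV. \<Sum>l<CARD('m). A$p$q * (f l $ p * f l $ q))"
    by (intro sum.cong refl) (rule sum.swap)
  also have "\<dots> = (\<Sum>p\<in>UNIV. \<Sum>q\<in>UNIV. A$p$q * (\<Sum>l<CARD('m). f l $ p * f l $ q))"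
    by (simp only: sum_distrib_left)
  also have "\<dots> = trace A" by (simp add: delta trace_def if_distrib cong: if_cong)
  finally have "trace A = (\<Sum>l<CARD('m). f l \<bullet> (A *v f l))" by simp
  also have "\<dots> = (\<Sum>i<?n. e i \<bullet> (A *v e i)) + x \<bullet> (A *v x)"
  proof -
    have "(\<Sum>l<CARD('m). f l \<bullet> (A *v f l)) = (\<Sum>l<Suc ?n. f l \<bullet> (A *v f l))" by (simp only: cN)
    also have "\<dots> = (\<Sum>i<?n. f i \<bullet> (A *v f i)) + x \<bullet> (A *v x)"
      by (simp only: sum.lessThan_Suc) (simp add: f_def)
    also have "(\<Sum>i<?n. f i \<bullet> (A *v f i)) = (\<Sum>i<?n. e i \<bullet> (A *v e i))"
      by (intro sum.cong) (auto simp: f_def)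
    finally show ?thesis .
  qed
  finally show ?thesis .
qed

lemma trace_mpow_eig:
  fixes M :: "real^'m^'m"
  assumes onb: "onb x e" and Mx: "M *v x = 0"
    and eig: "\<And>i. i < CARD('m) - 1 \<Longrightarrow> M *v e i = lam i *\<^sub>R e i" and j: "j > 0"
  shows "trace (mpow M j) = psum (CARD('m) - 1) lam j"
proof -
  have ee: "e i \<bullet> e i = 1" if "i < CARD('m) - 1" for i using onb that by (auto simp: onb_def)
  have "trace (mpow M j) = (\<Sum>i<CARD('m) - 1. e i \<bullet> (mpow M j *v e i)) + x \<bullet> (mpow M j *v x)"
    by (rule onb_trace[OF onb])
  also have "\<dots> = (\<Sum>i<CARD('m) - 1. lam i ^ j)"
    using mpow_eig[OF eig] mpow_zero_vec[OF Mx j] ee by simp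
  finally show ?thesis by (simp add: psum_def)
qed

lemma sigma_tan_Phi:
  fixes M :: "real^'m^'m"
  assumes sym: "transpose M = M" and Mx: "M *v x = 0" and nx: "norm x = 1"
  shows "sigma_tan k x M = Phi k (\<lambda>j. trace (mpow M j))"
proof -
  let ?n = "CARD('m) - 1"
  let ?P = "\<lambda>j. trace (mpow M j)"
  have key: "esym k ?n lam = Phi k ?P" if tl: "tan_eigenvalues x M lam" for lam
  proof -
    obtain e where e: "\<forall>i < ?n. e i \<bullet> x = 0 \<and> M *v e i = lam i *\<^sub>R e i"
        "\<forall>i < ?n. \<forall>j < ?n. e i \<bullet> e j = (if i = j then 1 else 0)"
      using tl unfolding tan_eigenvalues_def by blast
    have onb: "onb x e" using e nx by (simp add: onb_def)
    have "esym k ?n lam = Phi k (psum ?n lam)" by (rule esym_Phi)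
    also have "\<dots> = Phi k ?P"
    proof (rule Phi_cong)
      fix j :: nat assume "j > 0"
      then show "psum ?n lam j = trace (mpow M j)"
        using trace_mpow_eig[OF onb Mx, of lam j] e by simp
    qed
    finally show ?thesis .
  qed
  obtain e where e: "\<forall>i < ?n. e i \<bullet> x = 0 \<and> M *v e i = (e i \<bullet> (M *v e i)) *\<^sub>R e i"
      "\<forall>i < ?n. \<forall>j < ?n. e i \<bullet> e j = (if i = j then 1 else 0)"
    using tan_eig_exists[OF sym Mx nx] by blast
  have ex: "tan_eigenvalues x M (\<lambda>i. e i \<bullet> (M *v e i))"
    unfolding tan_eigenvalues_def using e by blast
  show ?thesis
    unfolding sigma_tan_def
  proof (rule the_equality)
    show "\<exists>lam. tan_eigenvalues x M lam \<and> Phi k ?P = esym k ?n lam"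
      using ex key by metis
    show "\<And>s. \<exists>lam. tan_eigenvalues x M lam \<and> s = esym k ?n lam \<Longrightarrow> s = Phi k ?P"
      using key by blast
  qed
qed

fun Dm :: "real^'m^'m \<Rightarrow> real^'m^'m \<Rightarrow> nat \<Rightarrow> real^'m^'m" where
  "Dm B W 0 = 0"
| "Dm B W (Suc j) = B ** Dm B W j + W ** mpow B j"

lemma mpow_deriv:
  "((\<lambda>t::real. mpow (B + t *\<^sub>R W) j) has_vector_derivative Dm B W j) (at 0)"
proof (induction j)
  case 0 then show ?case by simp
next
  case (Suc j)
  have f: "((\<lambda>t::real. B + t *\<^sub>R W) has_vector_derivative W) (at 0)"
    by (auto intro!: derivative_eq_intros)
  show ?case
    using bounded_bilinear.has_vector_derivative[OF bb_matmul f Suc] by simp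
qed

lemma trace_deriv:
  "((\<lambda>t::real. trace (mpow (B + t *\<^sub>R W) j)) has_real_derivative trace (Dm B W j)) (at 0)"
  using bounded_linear.has_vector_derivative[OF bl_trace mpow_deriv]
  by (simp add: has_real_derivative_iff_has_vector_derivative)

lemma Dm_diag:
  fixes B W :: "real^'m^'m"
  assumes symB: "transpose B = B" and Bx: "B *v x = 0" and Wx: "W *v x = 0"
    and eig: "B *v v = l *\<^sub>R v"
  shows "v \<bullet> (Dm B W j *v v) = real j * l ^ (j - 1) * (v \<bullet> (W *v v))"
proof -
  show "v \<bullet> (Dm B W j *v v) = real j * l ^ (j - 1) * (v \<bullet> (W *v v))"
  proof (induction j)
    case 0 then show ?case by simp
  next
    case (Suc j)
    have "v \<bullet> (Dm B W (Suc j) *v v) = v \<bullet> (B *v (Dm B W j *v v)) + v \<bullet> (W *v (mpow B j *v v))"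
      by (simp add: matrix_vector_mult_add_rdistrib matrix_vector_mul_assoc[symmetric] inner_add_right)
    also have "v \<bullet> (B *v (Dm B W j *v v)) = l * (v \<bullet> (Dm B W j *v v))"
      using sym_inner[OF symB, of v] eig by simp
    also have "v \<bullet> (W *v (mpow B j *v v)) = l ^ j * (v \<bullet> (W *v v))"
      using mpow_eig[OF eig, of j] by (simp add: matrix_vector_mult_scaleR)
    finally have h: "v \<bullet> (Dm B W (Suc j) *v v) = l * (real j * l ^ (j - 1) * (v \<bullet> (W *v v))) + l ^ j * (v \<bullet> (W *v v))"
      using Suc.IH by simp
    have "l * (real j * l ^ (j - 1) * (v \<bullet> (W *v v))) + l ^ j * (v \<bullet> (W *v v))
        = real (Suc j) * l ^ (Suc j - 1) * (v \<bullet> (W *v v))"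
      by (cases j) (simp_all add: algebra_simps)
    then show ?case using h by simp
  qed
qed

lemma Dm_x:
  fixes B W :: "real^'m^'m"
  assumes symB: "transpose B = B" and Bx: "B *v x = 0" and Wx: "W *v x = 0"
  shows "x \<bullet> (Dm B W j *v x) = 0"
proof -
  show "x \<bullet> (Dm B W j *v x) = 0"
  proof (cases j)
    case 0 then show ?thesis by simp
  next
    case (Suc j')
    have "x \<bullet> (Dm B W j *v x) = x \<bullet> (B *v (Dm B W j' *v x)) + x \<bullet> (W *v (mpow B j' *v x))"
      using Suc by (simp add: matrix_vector_mult_add_rdistrib matrix_vector_mul_assoc[symmetric] inner_add_right)
    also have "x \<bullet> (B *v (Dm B W j' *v x)) = 0"
      using sym_inner[OF symB, of x] Bx by simp
    also have "x \<bullet> (W *v (mpow B j' *v x)) = 0"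
    proof (cases j')
      case 0 then show ?thesis using Wx by simp
    next
      case (Suc j'')
      then show ?thesis using mpow_zero_vec[OF Bx, of j'] by simp
    qed
    finally show ?thesis by simp
  qed
qed

lemma transpose_add': "transpose (A + B) = transpose A + transpose (B::real^'n^'m)"
  by (simp add: transpose_def vec_eq_iff)

lemma transpose_diff': "transpose (A - B) = transpose A - transpose (B::real^'n^'m)"
  by (simp add: transpose_def vec_eq_iff)

lemma FL_core:
  fixes B W :: "real^'m^'m" and x :: "real^'m"
  assumes symB: "transpose B = B" and symW: "transpose W = W"
    and Bx: "B *v x = 0" and Wx: "W *v x = 0" and onb: "onb x e"
    and eig: "\<And>i. i < CARD('m) - 1 \<Longrightarrow> B *v e i = lam i *\<^sub>R e i"
  shows "sigma_tan k x B = esym k (CARD('m) - 1) lam"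
    and "\<exists>D. ((\<lambda>t. sigma_tan k x (B + t *\<^sub>R W)) has_real_derivative D) (at 0) \<and>
             ((\<lambda>t. esym k (CARD('m) - 1) (\<lambda>i. lam i + t * (e i \<bullet> (W *v e i)))) has_real_derivative D) (at 0)"
proof -
  let ?n = "CARD('m) - 1"
  define d where "d i = e i \<bullet> (W *v e i)" for i
  define a where "a j = psum ?n lam j" for j
  define b where "b j = real j * (\<Sum>i<?n. lam i ^ (j - 1) * d i)" for j
  define P where "P j t = trace (mpow (B + t *\<^sub>R W) j)" for j and t :: real
  define Q where "Q j t = psum ?n (\<lambda>i. lam i + t * d i) j" for j and t :: real
  have nx: "norm x = 1" using onb by (simp add: onb_def)
  have ee: "e i \<bullet> e i = 1" if "i < ?n" for i using onb that by (auto simp: onb_def)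
  have symt: "transpose (B + t *\<^sub>R W) = B + t *\<^sub>R W" for t
    using symB symW by (simp add: transpose_add' transpose_scalar)
  have Mtx: "(B + t *\<^sub>R W) *v x = 0" for t
    using Bx Wx by (simp add: matrix_vector_mult_add_rdistrib scaleR_matrix_vector_assoc[symmetric])
  have sig: "sigma_tan k x (B + t *\<^sub>R W) = Phi k (\<lambda>j. P j t)" for t
    unfolding P_def by (rule sigma_tan_Phi[OF symt Mtx nx])
  have sig0: "sigma_tan k x B = Phi k (\<lambda>j. P j 0)" using sig[of 0] by simp
  have Pv: "P j 0 = a j" if "j > 0" for j
    unfolding P_def a_def using trace_mpow_eig[OF onb Bx eig that] by simp
  have Pd: "(P j has_real_derivative b j) (at 0)" if "j > 0" for j
  proof -
    have "trace (Dm B W j) = (\<Sum>i<?n. e i \<bullet> (Dm B W j *v e i)) + x \<bullet> (Dm B W j *v x)"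
      by (rule onb_trace[OF onb])
    also have "\<dots> = (\<Sum>i<?n. real j * lam i ^ (j - 1) * d i)"
      using Dm_diag[OF symB Bx Wx eig] Dm_x[OF symB Bx Wx] by (simp add: d_def)
    also have "\<dots> = b j" by (simp add: b_def sum_distrib_left mult.assoc)
    finally have "trace (Dm B W j) = b j" .
    then show ?thesis using trace_deriv[of B W j] unfolding P_def[abs_def] by simp
  qed
  have Qv: "Q j 0 = a j" for j by (simp add: Q_def a_def)
  have Qd: "(Q j has_real_derivative b j) (at 0)" for j
  proof -
    have "((\<lambda>t. \<Sum>i<?n. (lam i + t * d i) ^ j) has_real_derivative
             (\<Sum>i<?n. real j * (lam i + 0 * d i) ^ (j - 1) * d i)) (at 0)"
    proof (rule DERIV_sum)
      fix i
      have "((\<lambda>t. lam i + t * d i) has_real_derivative d i) (at 0)"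
        by (auto intro!: derivative_eq_intros)
      from DERIV_power[OF this, of j]
      show "((\<lambda>t. (lam i + t * d i) ^ j) has_real_derivative real j * (lam i + 0 * d i) ^ (j - 1) * d i) (at 0)"
        by (simp add: mult_ac)
    qed
    moreover have "Q j = (\<lambda>t. \<Sum>i<?n. (lam i + t * d i) ^ j)" by (simp add: Q_def[abs_def] psum_def)
    moreover have "(\<Sum>i<?n. real j * (lam i + 0 * d i) ^ (j - 1) * d i) = b j"
      by (simp add: b_def sum_distrib_left mult.assoc)
    ultimately show ?thesis by simp
  qed
  have h1: "((\<lambda>t. Phi k (\<lambda>j. P j t)) has_real_derivative dPhi k a b) (at 0)"
    by (rule Phi_deriv) (auto intro: Pd Pv)
  have h2: "((\<lambda>t. Phi k (\<lambda>j. Q j t)) has_real_derivative dPhi k a b) (at 0)"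
    by (rule Phi_deriv) (auto intro: Qd Qv)
  have "Phi k (\<lambda>j. P j 0) = Phi k a" by (rule Phi_cong) (simp add: Pv)
  then show "sigma_tan k x B = esym k ?n lam" using sig0 by (simp add: esym_Phi a_def[abs_def])
  have eq2: "(\<lambda>t. esym k ?n (\<lambda>i. lam i + t * (e i \<bullet> (W *v e i)))) = (\<lambda>t. Phi k (\<lambda>j. Q j t))"
    by (simp only: esym_Phi Q_def d_def)
  have eqf: "(\<lambda>t. sigma_tan k x (B + t *\<^sub>R W)) = (\<lambda>t. Phi k (\<lambda>j. P j t))"
    using sig by auto
  then show "\<exists>D. ((\<lambda>t. sigma_tan k x (B + t *\<^sub>R W)) has_real_derivative D) (at 0) \<and>
             ((\<lambda>t. esym k ?n (\<lambda>i. lam i + t * (e i \<bullet> (W *v e i)))) has_real_derivative D) (at 0)"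
    unfolding eqf eq2 using h1 h2 by blast
qed

lemma deriv_compare_le:
  fixes f g :: "real \<Rightarrow> real"
  assumes f: "(f has_real_derivative D) (at 0)" and g: "(g has_real_derivative E) (at 0)"
    and fg0: "f 0 = g 0" and ev: "eventually (\<lambda>t. f t \<le> g t) (at_right 0)"
  shows "D \<le> E"
proof (rule ccontr)
  assume "\<not> D \<le> E"
  then have pos: "D - E > 0" by simp
  have "((\<lambda>t. f t - g t) has_real_derivative D - E) (at 0)" using f g by (rule DERIV_diff)
  from DERIV_pos_inc_right[OF this pos] obtain d where d: "d > 0" "\<And>h. h > 0 \<Longrightarrow> h < d \<Longrightarrow> f 0 - g 0 < f (0 + h) - g (0 + h)"
    by blast
  from ev obtain b where b: "b > 0" "\<And>y. y > 0 \<Longrightarrow> y < b \<Longrightarrow> f y \<le> g y"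
    unfolding eventually_at_right_field by auto
  define h where "h = min d b / 2"
  have "h > 0" "h < d" "h < b" using d b by (auto simp: h_def)
  then show False using d(2)[of h] b(2)[of h] fg0 by simp
qed

lemma esym_mono:
  assumes "\<And>i. i < n \<Longrightarrow> 0 \<le> mu i \<and> mu i \<le> nu i"
  shows "esym k n mu \<le> esym k n nu"
  unfolding esym_def
proof (rule sum_mono)
  fix S assume "S \<in> {S. S \<subseteq> {..<n} \<and> card S = k}"
  then have "\<And>i. i \<in> S \<Longrightarrow> 0 \<le> mu i \<and> mu i \<le> nu i" using assms by auto
  then show "(\<Prod>i\<in>S. mu i) \<le> (\<Prod>i\<in>S. nu i)" by (rule prod_mono)
qed

lemma esym_scale: "esym k n (\<lambda>i. s * lam i) = s ^ k * esym k n lam"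
  unfolding esym_def sum_distrib_left
proof (rule sum.cong[OF refl])
  fix S assume "S \<in> {S. S \<subseteq> {..<n} \<and> card S = k}"
  then show "(\<Prod>i\<in>S. s * lam i) = s ^ k * (\<Prod>i\<in>S. lam i)"
    by (simp add: prod.distrib)
qed

lemma esym_pos:
  assumes "\<And>i. i < n \<Longrightarrow> lam i > 0" and "k \<le> n"
  shows "esym k n lam > 0"
  unfolding esym_def
proof (rule sum_pos2)
  show "finite {S. S \<subseteq> {..<n} \<and> card S = k}"
    by (rule finite_subset[of _ "Pow {..<n}"]) auto
  show "{..<k} \<in> {S. S \<subseteq> {..<n} \<and> card S = k}" using assms(2) by auto
  show "0 < (\<Prod>i\<in>{..<k}. lam i)" using assms by (intro prod_pos) auto
  show "\<And>S. S \<in> {S. S \<subseteq> {..<n} \<and> card S = k} \<Longrightarrow> 0 \<le> (\<Prod>i\<in>S. lam i)"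
  proof -
    fix S assume "S \<in> {S. S \<subseteq> {..<n} \<and> card S = k}"
    then have "\<And>i. i \<in> S \<Longrightarrow> 0 \<le> lam i" using assms(1) by (auto intro: less_imp_le)
    then show "0 \<le> (\<Prod>i\<in>S. lam i)" by (rule prod_nonneg)
  qed
qed

lemma FL_sign:
  fixes B G :: "real^'m^'m" and x :: "real^'m" and c :: real and s :: real
  assumes symB: "transpose B = B" and symG: "transpose G = G"
    and Bx: "B *v x = 0" and Gx: "G *v x = 0" and nx: "norm x = 1"
    and k1: "1 \<le> k" and kn: "k \<le> CARD('m) - 1"
    and Bpos: "\<And>y. y \<bullet> x = 0 \<Longrightarrow> y \<noteq> 0 \<Longrightarrow> y \<bullet> (B *v y) > 0"
    and s: "s = 1 \<or> s = -1"
    and Gs: "\<And>y. y \<bullet> x = 0 \<Longrightarrow> s * (y \<bullet> (G *v y)) \<le> 0"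
  shows "s * Flin k x B (c *\<^sub>R B + G) \<le> s * (c * Fk k x B)"
proof -
  let ?n = "CARD('m) - 1"
  let ?W = "c *\<^sub>R B + G"
  obtain e where e: "\<forall>i < ?n. e i \<bullet> x = 0 \<and> B *v e i = (e i \<bullet> (B *v e i)) *\<^sub>R e i"
      "\<forall>i < ?n. \<forall>j < ?n. e i \<bullet> e j = (if i = j then 1 else 0)"
    using tan_eig_exists[OF symB Bx nx] by blast
  define lam where "lam i = e i \<bullet> (B *v e i)" for i
  define g where "g i = e i \<bullet> (G *v e i)" for i
  have onb: "onb x e" using e nx by (simp add: onb_def)
  have eig: "\<And>i. i < ?n \<Longrightarrow> B *v e i = lam i *\<^sub>R e i" using e by (simp add: lam_def)
  have lpos: "lam i > 0" if "i < ?n" for i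
  proof -
    have "e i \<noteq> 0" using e(2) that by (metis inner_zero_left zero_neq_one)
    then show ?thesis using Bpos[of "e i"] e(1) that by (simp add: lam_def)
  qed
  have gs: "s * g i \<le> 0" if "i < ?n" for i using Gs[of "e i"] e(1) that by (simp add: g_def)
  have symW: "transpose ?W = ?W" using symB symG by (simp add: transpose_add' transpose_scalar)
  have Wx: "?W *v x = 0"
    using Bx Gx by (simp add: matrix_vector_mult_add_rdistrib scaleR_matrix_vector_assoc[symmetric])
  have dW: "e i \<bullet> (?W *v e i) = c * lam i + g i" for i
    by (simp add: matrix_vector_mult_add_rdistrib scaleR_matrix_vector_assoc[symmetric] inner_add_right lam_def g_def)
  have S0: "sigma_tan k x B = esym k ?n lam" by (rule FL_core(1)[OF symB symW Bx Wx onb eig])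
  obtain D where D1: "((\<lambda>t. sigma_tan k x (B + t *\<^sub>R ?W)) has_real_derivative D) (at 0)"
     and D2: "((\<lambda>t. esym k ?n (\<lambda>i. lam i + t * (e i \<bullet> (?W *v e i)))) has_real_derivative D) (at 0)"
    using FL_core(2)[OF symB symW Bx Wx onb eig, of k] by blast
  define S where "S = esym k ?n lam"
  have Spos: "S > 0" unfolding S_def using lpos kn by (rule esym_pos)
  have E: "((\<lambda>t. (1 + t * c) ^ k * S) has_real_derivative real k * c * S) (at 0)"
  proof -
    have "((\<lambda>t. 1 + t * c) has_real_derivative c) (at 0)" by (auto intro!: derivative_eq_intros)
    from DERIV_power[OF this, of k] have "((\<lambda>t. (1 + t * c) ^ k) has_real_derivative real k * c) (at 0)"
      by simp
    from DERIV_mult[OF this DERIV_const[of S]] show ?thesis by simp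
  qed
  have ev1: "\<forall>\<^sub>F t in at_right 0. \<forall>i\<in>{..<?n}. 0 \<le> lam i + t * (c * lam i + g i)"
  proof (rule eventually_ball_finite)
    show "finite {..<?n}" by simp
    show "\<forall>i\<in>{..<?n}. \<forall>\<^sub>F t in at_right 0. 0 \<le> lam i + t * (c * lam i + g i)"
    proof
      fix i assume "i \<in> {..<?n}"
      then have "lam i > 0" using lpos by simp
      moreover have "((\<lambda>t. lam i + t * (c * lam i + g i)) \<longlongrightarrow> lam i) (at_right 0)"
        by (auto intro!: tendsto_eq_intros)
      ultimately have "\<forall>\<^sub>F t in at_right 0. 0 < lam i + t * (c * lam i + g i)"
        using order_tendstoD(1) by blast
      then show "\<forall>\<^sub>F t in at_right 0. 0 \<le> lam i + t * (c * lam i + g i)"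
        by (rule eventually_mono) simp
    qed
  qed
  have ev2: "\<forall>\<^sub>F t in at_right 0. 0 \<le> 1 + t * c"
  proof -
    have "((\<lambda>t. 1 + t * c) \<longlongrightarrow> 1) (at_right (0::real))"
      by (auto intro!: tendsto_eq_intros)
    then have "\<forall>\<^sub>F t in at_right 0. 0 < 1 + t * c" using order_tendstoD(1) by fastforce
    then show ?thesis by (rule eventually_mono) simp
  qed
  have ev: "\<forall>\<^sub>F t in at_right 0.
      s * esym k ?n (\<lambda>i. lam i + t * (e i \<bullet> (?W *v e i))) \<le> s * ((1 + t * c) ^ k * S)"
    using ev1 ev2 eventually_at_right_less[of "0::real"]
  proof eventually_elim
    case (elim t)
    have mu: "lam i + t * (e i \<bullet> (?W *v e i)) = (1 + t * c) * lam i + t * g i" for i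
      unfolding dW by (simp add: algebra_simps)
    have sc: "esym k ?n (\<lambda>i. (1 + t * c) * lam i) = (1 + t * c) ^ k * S"
      by (simp add: esym_scale S_def)
    show ?case
      using s
    proof
      assume s1: "s = 1"
      have "esym k ?n (\<lambda>i. (1 + t * c) * lam i + t * g i) \<le> esym k ?n (\<lambda>i. (1 + t * c) * lam i)"
      proof (rule esym_mono)
        fix i assume i: "i < ?n"
        have "t * g i \<le> 0" using gs[OF i] s1 elim(3) by (simp add: mult_nonneg_nonpos)
        then show "0 \<le> (1 + t * c) * lam i + t * g i \<and> (1 + t * c) * lam i + t * g i \<le> (1 + t * c) * lam i"
          using elim(1) i by (auto simp: algebra_simps)
      qed
      then show ?thesis using s1 sc mu by simp
    next
      assume s1: "s = -1"
      have "esym k ?n (\<lambda>i. (1 + t * c) * lam i) \<le> esym k ?n (\<lambda>i. (1 + t * c) * lam i + t * g i)"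
      proof (rule esym_mono)
        fix i assume i: "i < ?n"
        have "t * g i \<ge> 0" using gs[OF i] s1 elim(3) by simp
        moreover have "(1 + t * c) * lam i \<ge> 0" using elim(2) lpos[OF i] by simp
        ultimately show "0 \<le> (1 + t * c) * lam i \<and> (1 + t * c) * lam i \<le> (1 + t * c) * lam i + t * g i"
          by simp
      qed
      then show ?thesis using s1 sc mu by simp
    qed
  qed
  have sD: "s * D \<le> s * (real k * c * S)"
  proof (rule deriv_compare_le[OF _ _ _ ev])
    show "((\<lambda>t. s * esym k ?n (\<lambda>i. lam i + t * (e i \<bullet> (?W *v e i)))) has_real_derivative s * D) (at 0)"
      using DERIV_cmult[OF D2] by simp
    show "((\<lambda>t. s * ((1 + t * c) ^ k * S)) has_real_derivative s * (real k * c * S)) (at 0)"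
      using DERIV_cmult[OF E] by simp
    show "s * esym k ?n (\<lambda>i. lam i + 0 * (e i \<bullet> (?W *v e i))) = s * ((1 + 0 * c) ^ k * S)"
      by (simp add: S_def)
  qed
  have g0: "sigma_tan k x (B + 0 *\<^sub>R ?W) = S" using S0 by (simp add: S_def)
  have "((\<lambda>t. sigma_tan k x (B + t *\<^sub>R ?W) powr (1 / real k)) has_real_derivative
      S powr (1 / real k) * (0 * ln S + D * (1 / real k) / S)) (at 0)"
    using DERIV_powr[OF D1, of "\<lambda>_. 1 / real k" 0] g0 Spos by simp
  then have Fl: "Flin k x B ?W = S powr (1 / real k) * (D / (real k * S))"
    unfolding Flin_def Fk_def by (simp add: DERIV_imp_deriv)
  have FB: "Fk k x B = S powr (1 / real k)" unfolding Fk_def using S0 by (simp add: S_def)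
  have kpos: "real k > 0" using k1 by simp
  have "s * (D / (real k * S)) \<le> s * c"
  proof -
    have "s * (D / (real k * S)) = (s * D) / (real k * S)" by simp
    also have "\<dots> \<le> (s * (real k * c * S)) / (real k * S)"
      using sD kpos Spos by (intro divide_right_mono) auto
    also have "\<dots> = s * c" using kpos Spos by simp
    finally show ?thesis .
  qed
  then have "S powr (1 / real k) * (s * (D / (real k * S))) \<le> S powr (1 / real k) * (s * c)"
    by (rule mult_left_mono) simp_all
  then show ?thesis unfolding Fl FB by (simp add: mult_ac)
qed

lemma Ck_on_subset: "Ck_on m S f \<Longrightarrow> T \<subseteq> S \<Longrightarrow> Ck_on m T f"
  by (induction m arbitrary: f) (auto intro: continuous_on_subset)

lemma Ck2_D:
  assumes "Ck_on 2 S f"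
  shows "\<And>x. x \<in> S \<Longrightarrow> f differentiable (at x)"
    and "\<And>x i. x \<in> S \<Longrightarrow> i \<in> Basis \<Longrightarrow> (\<lambda>y. frechet_derivative f (at y) i) differentiable (at x)"
    and "\<And>i j. i \<in> Basis \<Longrightarrow> j \<in> Basis \<Longrightarrow>
           continuous_on S (\<lambda>y. frechet_derivative (\<lambda>z. frechet_derivative f (at z) i) (at y) j)"
  using assms by (auto simp: numeral_2_eq_2)

lemma line_deriv:
  assumes "f differentiable (at (x + s *\<^sub>R a))"
  shows "((\<lambda>t. f (x + t *\<^sub>R a)) has_real_derivative frechet_derivative f (at (x + s *\<^sub>R a)) a) (at s)"
proof -
  let ?D = "frechet_derivative f (at (x + s *\<^sub>R a))"
  have h: "(f has_derivative ?D) (at (x + s *\<^sub>R a))" using assms frechet_derivative_works by blast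
  have bl: "bounded_linear ?D" using h has_derivative_bounded_linear by blast
  have l: "((\<lambda>t. x + t *\<^sub>R a) has_derivative (\<lambda>t. t *\<^sub>R a)) (at s)"
    by (auto intro!: derivative_eq_intros)
  have "((\<lambda>t. f (x + t *\<^sub>R a)) has_derivative (\<lambda>t. ?D (t *\<^sub>R a))) (at s)"
    using has_derivative_compose[OF l h] by simp
  moreover have "(\<lambda>t. ?D (t *\<^sub>R a)) = (\<lambda>t. ?D a * t)"
    using linear_scale[OF bounded_linear.linear[OF bl]] by (auto simp: mult.commute)
  ultimately show ?thesis by (simp add: has_field_derivative_def)
qed


lemma schwarz_delta:
  fixes f :: "'a::euclidean_space \<Rightarrow> real"
  assumes S: "Ck_on 2 S f" and cb: "cball x (2 * h) \<subseteq> S" and h: "h > 0"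
    and a: "a \<in> Basis" and b: "b \<in> Basis"
  shows "\<exists>\<xi>. dist \<xi> x \<le> 2 * h \<and>
     f (x + h *\<^sub>R b + h *\<^sub>R a) - f (x + h *\<^sub>R a) - f (x + h *\<^sub>R b) + f x
       = h * (h * frechet_derivative (\<lambda>z. frechet_derivative f (at z) a) (at \<xi>) b)"
proof -
  let ?pa = "\<lambda>z. frechet_derivative f (at z) a"
  have na: "norm a = 1" and nb: "norm b = 1" using a b by auto
  have inS: "x + s *\<^sub>R a + t *\<^sub>R b \<in> S" if "0 \<le> s" "s \<le> h" "0 \<le> t" "t \<le> h" for s t
  proof -
    have "norm (s *\<^sub>R a + t *\<^sub>R b) \<le> norm (s *\<^sub>R a) + norm (t *\<^sub>R b)" by (rule norm_triangle_ineq)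
    also have "\<dots> \<le> 2 * h" using that na nb by simp
    finally have "dist (x + s *\<^sub>R a + t *\<^sub>R b) x \<le> 2 * h" by (simp add: dist_norm add.assoc)
    then show ?thesis using cb by (auto simp: dist_commute)
  qed
  define g where "g s = f (x + h *\<^sub>R b + s *\<^sub>R a) - f (x + s *\<^sub>R a)" for s
  have gd: "(g has_real_derivative (?pa (x + h *\<^sub>R b + s *\<^sub>R a) - ?pa (x + s *\<^sub>R a))) (at s)"
    if "0 \<le> s" "s \<le> h" for s
  proof -
    have d1: "f differentiable (at (x + h *\<^sub>R b + s *\<^sub>R a))"
      using Ck2_D(1)[OF S] inS[of s h] that h by (simp add: add_ac)
    have d2: "f differentiable (at (x + s *\<^sub>R a))"
      using Ck2_D(1)[OF S] inS[of s 0] that h by simp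
    show ?thesis unfolding g_def[abs_def]
      by (rule DERIV_diff[OF line_deriv[OF d1] line_deriv[OF d2]])
  qed
  obtain s1 where s1: "0 < s1" "s1 < h"
      "g h - g 0 = (h - 0) * (?pa (x + h *\<^sub>R b + s1 *\<^sub>R a) - ?pa (x + s1 *\<^sub>R a))"
    using MVT2[OF h, of g "\<lambda>s. ?pa (x + h *\<^sub>R b + s *\<^sub>R a) - ?pa (x + s *\<^sub>R a)"] gd by auto
  define \<psi> where "\<psi> t = ?pa (x + s1 *\<^sub>R a + t *\<^sub>R b)" for t
  have \<psi>d: "(\<psi> has_real_derivative frechet_derivative ?pa (at (x + s1 *\<^sub>R a + t *\<^sub>R b)) b) (at t)"
    if "0 \<le> t" "t \<le> h" for t
  proof -
    have "?pa differentiable (at (x + s1 *\<^sub>R a + t *\<^sub>R b))"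
      using Ck2_D(2)[OF S _ a] inS[of s1 t] that s1 by simp
    then show ?thesis unfolding \<psi>_def[abs_def] by (rule line_deriv)
  qed
  obtain t1 where t1: "0 < t1" "t1 < h"
      "\<psi> h - \<psi> 0 = (h - 0) * frechet_derivative ?pa (at (x + s1 *\<^sub>R a + t1 *\<^sub>R b)) b"
    using MVT2[OF h, of \<psi> "\<lambda>t. frechet_derivative ?pa (at (x + s1 *\<^sub>R a + t *\<^sub>R b)) b"] \<psi>d by auto
  define \<xi> where "\<xi> = x + s1 *\<^sub>R a + t1 *\<^sub>R b"
  have "dist \<xi> x \<le> 2 * h"
  proof -
    have "norm (s1 *\<^sub>R a + t1 *\<^sub>R b) \<le> norm (s1 *\<^sub>R a) + norm (t1 *\<^sub>R b)" by (rule norm_triangle_ineq)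
    also have "\<dots> \<le> 2 * h" using s1 t1 na nb by simp
    finally show ?thesis by (simp add: \<xi>_def dist_norm add.assoc)
  qed
  moreover have "\<psi> h - \<psi> 0 = ?pa (x + h *\<^sub>R b + s1 *\<^sub>R a) - ?pa (x + s1 *\<^sub>R a)"
    by (simp add: \<psi>_def add_ac)
  moreover have "g h - g 0 = f (x + h *\<^sub>R b + h *\<^sub>R a) - f (x + h *\<^sub>R a) - f (x + h *\<^sub>R b) + f x"
    by (simp add: g_def)
  ultimately show ?thesis using s1(3) t1(3) \<xi>_def by auto
qed

lemma schwarz:
  fixes f :: "'a::euclidean_space \<Rightarrow> real"
  assumes S: "Ck_on 2 S f" and oS: "open S" and x: "x \<in> S"
    and a: "a \<in> Basis" and b: "b \<in> Basis"
  shows "frechet_derivative (\<lambda>z. frechet_derivative f (at z) a) (at x) b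
       = frechet_derivative (\<lambda>z. frechet_derivative f (at z) b) (at x) a"
proof (rule ccontr)
  let ?q = "\<lambda>a b z. frechet_derivative (\<lambda>z. frechet_derivative f (at z) a) (at z) b"
  assume ne: "?q a b x \<noteq> ?q b a x"
  define \<epsilon> where "\<epsilon> = \<bar>?q a b x - ?q b a x\<bar> / 3"
  have \<epsilon>: "\<epsilon> > 0" using ne by (simp add: \<epsilon>_def)
  have cont: "isCont (?q c d) x" if "c \<in> Basis" "d \<in> Basis" for c d
    using Ck2_D(3)[OF S that] oS x continuous_on_eq_continuous_at by blast
  obtain d1 where d1: "d1 > 0" "\<And>z. z \<noteq> x \<and> dist z x < d1 \<Longrightarrow> dist (?q a b z) (?q a b x) < \<epsilon>"
    using metric_LIM_D[OF cont[OF a b, unfolded isCont_def] \<epsilon>] by blast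
  obtain d2 where d2: "d2 > 0" "\<And>z. z \<noteq> x \<and> dist z x < d2 \<Longrightarrow> dist (?q b a z) (?q b a x) < \<epsilon>"
    using metric_LIM_D[OF cont[OF b a, unfolded isCont_def] \<epsilon>] by blast
  obtain r where r: "r > 0" "cball x r \<subseteq> S" using oS x open_contains_cball by blast
  define h where "h = min (min d1 d2) r / 3"
  have h: "h > 0" using d1 d2 r by (simp add: h_def)
  have cb: "cball x (2 * h) \<subseteq> S" using r h by (auto simp: h_def intro!: order_trans[OF _ r(2)])
  have hd: "2 * h < d1" "2 * h < d2" using d1 d2 r by (auto simp: h_def)
  obtain \<xi>1 where \<xi>1: "dist \<xi>1 x \<le> 2 * h"
     "f (x + h *\<^sub>R b + h *\<^sub>R a) - f (x + h *\<^sub>R a) - f (x + h *\<^sub>R b) + f x = h * (h * ?q a b \<xi>1)"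
    using schwarz_delta[OF S cb h a b] by blast
  obtain \<xi>2 where \<xi>2: "dist \<xi>2 x \<le> 2 * h"
     "f (x + h *\<^sub>R a + h *\<^sub>R b) - f (x + h *\<^sub>R b) - f (x + h *\<^sub>R a) + f x = h * (h * ?q b a \<xi>2)"
    using schwarz_delta[OF S cb h b a] by blast
  have "f (x + h *\<^sub>R b + h *\<^sub>R a) - f (x + h *\<^sub>R a) - f (x + h *\<^sub>R b) + f x
      = f (x + h *\<^sub>R a + h *\<^sub>R b) - f (x + h *\<^sub>R b) - f (x + h *\<^sub>R a) + f x"
    by (simp add: add_ac)
  then have "h * (h * ?q a b \<xi>1) = h * (h * ?q b a \<xi>2)"
    using \<xi>1(2) \<xi>2(2) by simp
  then have eq: "?q a b \<xi>1 = ?q b a \<xi>2" using h by simp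
  have e1: "\<bar>?q a b \<xi>1 - ?q a b x\<bar> < \<epsilon>"
  proof (cases "\<xi>1 = x")
    case True then show ?thesis using \<epsilon> by simp
  next
    case False then show ?thesis using d1(2)[of \<xi>1] \<xi>1(1) hd by (simp add: dist_real_def)
  qed
  have e2: "\<bar>?q b a \<xi>2 - ?q b a x\<bar> < \<epsilon>"
  proof (cases "\<xi>2 = x")
    case True then show ?thesis using \<epsilon> by simp
  next
    case False then show ?thesis using d2(2)[of \<xi>2] \<xi>2(1) hd by (simp add: dist_real_def)
  qed
  have "\<bar>?q a b x - ?q b a x\<bar> < 2 * \<epsilon>" using e1 e2 eq by linarith
  moreover have "\<bar>?q a b x - ?q b a x\<bar> = 3 * \<epsilon>" by (simp add: \<epsilon>_def)
  ultimately show False using \<epsilon> by linarith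
qed

lemma fd_egrad:
  fixes f :: "real^'m \<Rightarrow> real"
  assumes "f differentiable (at z)"
  shows "frechet_derivative f (at z) w = egrad f z \<bullet> w"
proof -
  have lin: "linear (frechet_derivative f (at z))" using assms by (rule linear_frechet_derivative)
  have "w = (\<Sum>k\<in>UNIV. (w $ k) *\<^sub>R axis k 1)"
    using basis_expansion[of w] by (simp add: scalar_mult_eq_scaleR)
  then have "frechet_derivative f (at z) w = frechet_derivative f (at z) (\<Sum>k\<in>UNIV. (w $ k) *\<^sub>R axis k 1)"
    by simp
  also have "\<dots> = (\<Sum>k\<in>UNIV. w $ k * frechet_derivative f (at z) (axis k 1))"
    using lin by (simp add: linear_sum linear_scale)
  also have "\<dots> = egrad f z \<bullet> w" by (simp add: egrad_def inner_vec_def mult.commute)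
  finally show ?thesis .
qed

lemma chain_vec:
  fixes f :: "real^'m \<Rightarrow> real"
  assumes g: "(g has_vector_derivative g') (at t)" and f: "f differentiable (at (g t))"
  shows "((\<lambda>t. f (g t)) has_real_derivative egrad f (g t) \<bullet> g') (at t)"
proof -
  let ?D = "frechet_derivative f (at (g t))"
  have h: "(f has_derivative ?D) (at (g t))" using f frechet_derivative_works by blast
  have bl: "bounded_linear ?D" using h has_derivative_bounded_linear by blast
  have "((\<lambda>t. f (g t)) has_derivative (\<lambda>s. ?D (s *\<^sub>R g'))) (at t)"
    using has_derivative_compose[OF g[unfolded has_vector_derivative_def] h] by simp
  moreover have "(\<lambda>s. ?D (s *\<^sub>R g')) = (\<lambda>s. ?D g' * s)"
    using linear_scale[OF bounded_linear.linear[OF bl]] by (auto simp: mult.commute)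
  ultimately show ?thesis using fd_egrad[OF f] by (simp add: has_field_derivative_def)
qed

definition gam :: "real^'m \<Rightarrow> real^'m \<Rightarrow> real \<Rightarrow> real^'m" where
  "gam x y t = cos t *\<^sub>R x + sin t *\<^sub>R y"

definition gam' :: "real^'m \<Rightarrow> real^'m \<Rightarrow> real \<Rightarrow> real^'m" where
  "gam' x y t = (- sin t) *\<^sub>R x + cos t *\<^sub>R y"

lemma gam_deriv: "(gam x y has_vector_derivative gam' x y t) (at t)"
  unfolding gam_def gam'_def by (auto intro!: derivative_eq_intros)

lemma gam_sphere:
  assumes "norm x = 1" "norm y = 1" "x \<bullet> y = 0"
  shows "norm (gam x y t) = 1"
proof -
  have xx: "x \<bullet> x = 1" "y \<bullet> y = 1" using assms by (metis power2_norm_eq_inner power_one)+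
  have "gam x y t \<bullet> gam x y t = (cos t)^2 + (sin t)^2"
    using xx assms(3) by (simp add: gam_def inner_add_left inner_add_right inner_commute power2_eq_square)
  then have "(norm (gam x y t))^2 = 1" by (simp add: power2_norm_eq_inner)
  then show ?thesis using norm_ge_zero[of "gam x y t"] by (auto simp: power2_eq_1_iff)
qed

lemma sphere_curve:
  fixes f :: "real^'m \<Rightarrow> real"
  assumes S: "Ck_on 2 S f" and sub: "sphere 0 1 \<subseteq> S"
    and nx: "norm x = 1" and ny: "norm y = 1" and xy: "x \<bullet> y = 0"
  shows "\<And>t. ((\<lambda>t. f (gam x y t)) has_real_derivative egrad f (gam x y t) \<bullet> gam' x y t) (at t)"
    and "((\<lambda>t. egrad f (gam x y t) \<bullet> gam' x y t) has_real_derivative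
           y \<bullet> (ehess f x *v y) - egrad f x \<bullet> x) (at 0)"
    and "egrad f (gam x y 0) \<bullet> gam' x y 0 = egrad f x \<bullet> y"
proof -
  have inS: "gam x y t \<in> S" for t using gam_sphere[OF nx ny xy, of t] sub by auto
  show "\<And>t. ((\<lambda>t. f (gam x y t)) has_real_derivative egrad f (gam x y t) \<bullet> gam' x y t) (at t)"
    using chain_vec[OF gam_deriv] Ck2_D(1)[OF S inS] by blast
  show "egrad f (gam x y 0) \<bullet> gam' x y 0 = egrad f x \<bullet> y" by (simp add: gam_def gam'_def)
  let ?p = "\<lambda>k z. frechet_derivative f (at z) (axis k 1)"
  have eq: "(\<lambda>t. egrad f (gam x y t) \<bullet> gam' x y t) = (\<lambda>t. \<Sum>k\<in>UNIV. ?p k (gam x y t) * (gam' x y t $ k))"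
    by (simp add: egrad_def inner_vec_def)
  have trm: "((\<lambda>t. ?p k (gam x y t) * (gam' x y t $ k)) has_real_derivative
      (egrad (?p k) x \<bullet> y) * y $ k + ?p k x * (- x $ k)) (at 0)" for k
  proof -
    have d1: "((\<lambda>t. ?p k (gam x y t)) has_real_derivative egrad (?p k) x \<bullet> y) (at 0)"
    proof -
      have "(?p k) differentiable (at (gam x y 0))"
        using Ck2_D(2)[OF S inS] by simp
      from chain_vec[OF gam_deriv this] show ?thesis by (simp add: gam_def gam'_def)
    qed
    have d2: "((\<lambda>t. gam' x y t $ k) has_real_derivative - x $ k) (at 0)"
      unfolding gam'_def by (auto intro!: derivative_eq_intros)
    have "((\<lambda>t. ?p k (gam x y t) * (gam' x y t $ k)) has_real_derivative
       (egrad (?p k) x \<bullet> y) * (gam' x y 0 $ k) + (- x $ k) * ?p k (gam x y 0)) (at 0)"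
      by (rule DERIV_mult[OF d1 d2])
    then show ?thesis by (simp add: gam_def gam'_def mult.commute)
  qed
  have "((\<lambda>t. \<Sum>k\<in>UNIV. ?p k (gam x y t) * (gam' x y t $ k)) has_real_derivative
      (\<Sum>k\<in>UNIV. (egrad (?p k) x \<bullet> y) * y $ k + ?p k x * (- x $ k))) (at 0)"
    by (rule DERIV_sum) (rule trm)
  moreover have "(\<Sum>k\<in>UNIV. (egrad (?p k) x \<bullet> y) * y $ k + ?p k x * (- x $ k))
      = y \<bullet> (ehess f x *v y) - egrad f x \<bullet> x"
  proof -
    let ?H = "ehess f x"
    have "(\<Sum>k\<in>UNIV. (egrad (?p k) x \<bullet> y) * y $ k) = (\<Sum>k\<in>UNIV. \<Sum>l\<in>UNIV. ?H $ l $ k * y $ l * y $ k)"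
      by (simp add: egrad_def ehess_def inner_vec_def sum_distrib_right)
    also have "\<dots> = (\<Sum>l\<in>UNIV. \<Sum>k\<in>UNIV. ?H $ l $ k * y $ l * y $ k)" by (rule sum.swap)
    also have "\<dots> = y \<bullet> (ehess f x *v y)"
      unfolding inner_vec_def matrix_vector_mult_def inner_real_def
      by (simp add: sum_distrib_left mult_ac)
    finally have "(\<Sum>k\<in>UNIV. (egrad (?p k) x \<bullet> y) * y $ k) = y \<bullet> (ehess f x *v y)" .
    moreover have "(\<Sum>k\<in>UNIV. ?p k x * (- x $ k)) = - (egrad f x \<bullet> x)"
      by (simp add: egrad_def inner_vec_def sum_negf)
    ultimately show ?thesis by (simp only: sum.distrib)
  qed
  ultimately show "((\<lambda>t. egrad f (gam x y t) \<bullet> gam' x y t) has_real_derivative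
           y \<bullet> (ehess f x *v y) - egrad f x \<bullet> x) (at 0)"
    unfolding eq by simp
qed

lemma second_deriv_max:
  fixes \<phi> \<phi>' :: "real \<Rightarrow> real"
  assumes d: "\<And>t. (\<phi> has_real_derivative \<phi>' t) (at t)" and d2: "(\<phi>' has_real_derivative L) (at 0)"
    and mx: "\<And>t. \<phi> t \<le> \<phi> 0"
  shows "\<phi>' 0 = 0" and "L \<le> 0"
proof -
  show z: "\<phi>' 0 = 0" using DERIV_local_max[OF d[of 0], of 1] mx by auto
  show "L \<le> 0"
  proof (rule ccontr)
    assume "\<not> L \<le> 0"
    then have "L > 0" by simp
    from DERIV_pos_inc_right[OF d2 this] obtain e where e: "e > 0" "\<And>h. h > 0 \<Longrightarrow> h < e \<Longrightarrow> \<phi>' 0 < \<phi>' (0 + h)"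
      by blast
    have "e / 2 > 0" using e by simp
    from MVT2[OF this, of \<phi> \<phi>'] d obtain z where z1: "0 < z" "z < e / 2" "\<phi> (e/2) - \<phi> 0 = (e/2 - 0) * \<phi>' z"
      by blast
    have "\<phi>' z > 0" using e(2)[of z] z1 z by simp
    then have "(e/2 - 0) * \<phi>' z > 0" using e by simp
    then have "\<phi> (e/2) - \<phi> 0 > 0" using z1(3) by linarith
    then show False using mx[of "e/2"] by simp
  qed
qed

lemma tproj_vec: "tproj x *v y = y - (x \<bullet> y) *\<^sub>R x"
proof -
  have "(\<chi> i j. x $ i * x $ j) *v y = (x \<bullet> y) *\<^sub>R x"
    by (simp add: vec_eq_iff matrix_vector_mult_def inner_vec_def sum_distrib_left sum_distrib_right mult_ac)
  then show ?thesis by (simp add: tproj_def matrix_vector_mult_diff_rdistrib)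
qed

lemma tproj_sym: "transpose (tproj x) = tproj x"
  by (simp add: tproj_def transpose_diff' transpose_mat) (simp add: transpose_def vec_eq_iff mult.commute)

lemma ehess_sym:
  fixes f :: "real^'m \<Rightarrow> real"
  assumes S: "Ck_on 2 S f" and oS: "open S" and x: "x \<in> S"
  shows "transpose (ehess f x) = ehess f x"
  unfolding transpose_def ehess_def vec_eq_iff
  using schwarz[OF S oS x] by simp

lemma shess_props:
  fixes f :: "real^'m \<Rightarrow> real"
  assumes symH: "transpose (ehess f x) = ehess f x" and nx: "norm x = 1"
  shows "transpose (bmat f x) = bmat f x"
    and "bmat f x *v x = 0"
    and "\<And>y. y \<bullet> x = 0 \<Longrightarrow> y \<bullet> (bmat f x *v y)
            = y \<bullet> (ehess f x *v y) - (egrad f x \<bullet> x) * (y \<bullet> y) + f x * (y \<bullet> y)"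
proof -
  let ?P = "tproj x" and ?M = "ehess f x - (egrad f x \<bullet> x) *\<^sub>R mat 1"
  have xx: "x \<bullet> x = 1" using nx by (metis power2_norm_eq_inner power_one)
  have symM: "transpose ?M = ?M" using symH by (simp add: transpose_diff' transpose_scalar transpose_mat)
  have Px: "?P *v x = 0" by (simp add: tproj_vec xx)
  show "transpose (bmat f x) = bmat f x"
    unfolding bmat_def shess_def
    by (simp add: transpose_add' transpose_scalar matrix_transpose_mul tproj_sym symM matrix_mul_assoc)
  show "bmat f x *v x = 0"
    unfolding bmat_def shess_def
    by (simp add: matrix_vector_mult_add_rdistrib scaleR_matrix_vector_assoc[symmetric]
        matrix_vector_mul_assoc[symmetric] Px)
  fix y assume yx: "y \<bullet> x = 0"
  have Py: "?P *v y = y" using yx by (simp add: tproj_vec inner_commute)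
  have "y \<bullet> (shess f x *v y) = y \<bullet> (?P *v (?M *v y))"
    unfolding shess_def by (simp add: matrix_vector_mul_assoc[symmetric] Py)
  also have "\<dots> = (?P *v y) \<bullet> (?M *v y)" by (rule sym_inner[OF tproj_sym])
  also have "\<dots> = y \<bullet> (ehess f x *v y) - (egrad f x \<bullet> x) * (y \<bullet> y)"
    using Py by (simp add: matrix_vector_mult_diff_rdistrib scaleR_matrix_vector_assoc[symmetric] inner_diff_right)
  finally have "y \<bullet> (shess f x *v y) = y \<bullet> (ehess f x *v y) - (egrad f x \<bullet> x) * (y \<bullet> y)" .
  moreover have "y \<bullet> ((f x *\<^sub>R ?P) *v y) = f x * (y \<bullet> y)"
    by (simp add: scaleR_matrix_vector_assoc[symmetric] Py)
  ultimately show "y \<bullet> (bmat f x *v y)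
            = y \<bullet> (ehess f x *v y) - (egrad f x \<bullet> x) * (y \<bullet> y) + f x * (y \<bullet> y)"
    unfolding bmat_def by (simp add: matrix_vector_mult_add_rdistrib inner_add_right)
qed

lemma extremum:
  fixes u v :: "real^'m \<Rightarrow> real"
  assumes Sv: "Ck_on 2 S v" and Su: "Ck_on 2 S u" and sub: "sphere 0 1 \<subseteq> S"
    and nx: "norm x = 1" and s: "s = 1 \<or> s = -1"
    and le: "\<And>z. z \<in> sphere 0 1 \<Longrightarrow> s * (v z - c * u z) \<le> 0" and eq: "v x = c * u x"
    and yx: "y \<bullet> x = 0"
  shows "egrad v x \<bullet> y = c * (egrad u x \<bullet> y)"
    and "s * ((y \<bullet> (ehess v x *v y) - (egrad v x \<bullet> x) * (y \<bullet> y))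
              - c * (y \<bullet> (ehess u x *v y) - (egrad u x \<bullet> x) * (y \<bullet> y))) \<le> 0"
proof -
  have both: "egrad v x \<bullet> y = c * (egrad u x \<bullet> y) \<and>
      s * ((y \<bullet> (ehess v x *v y) - (egrad v x \<bullet> x) * (y \<bullet> y))
              - c * (y \<bullet> (ehess u x *v y) - (egrad u x \<bullet> x) * (y \<bullet> y))) \<le> 0"
  proof (cases "y = 0")
    case True then show ?thesis by simp
  next
    case False
    define y' where "y' = y /\<^sub>R norm y"
    have ny': "norm y' = 1" using False by (simp add: y'_def)
    have xy': "x \<bullet> y' = 0" using yx by (simp add: y'_def inner_commute)
    define \<phi> where "\<phi> t = s * (v (gam x y' t) - c * u (gam x y' t))" for t
    define \<phi>' where "\<phi>' t = s * (egrad v (gam x y' t) \<bullet> gam' x y' t - c * (egrad u (gam x y' t) \<bullet> gam' x y' t))" for t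
    note cv = sphere_curve[OF Sv sub nx ny' xy'] and cu = sphere_curve[OF Su sub nx ny' xy']
    have d: "(\<phi> has_real_derivative \<phi>' t) (at t)" for t
      unfolding \<phi>_def[abs_def] \<phi>'_def
      by (intro DERIV_cmult DERIV_diff cv(1) cu(1))
    have d2: "(\<phi>' has_real_derivative
       s * ((y' \<bullet> (ehess v x *v y') - egrad v x \<bullet> x) - c * (y' \<bullet> (ehess u x *v y') - egrad u x \<bullet> x))) (at 0)"
      unfolding \<phi>'_def[abs_def]
      by (intro DERIV_cmult DERIV_diff cv(2) cu(2))
    have g0: "gam x y' 0 = x" by (simp add: gam_def)
    have mx: "\<phi> t \<le> \<phi> 0" for t
    proof -
      have "gam x y' t \<in> sphere 0 1" using gam_sphere[OF nx ny' xy'] by simp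
      then have "\<phi> t \<le> 0" using le unfolding \<phi>_def by blast
      moreover have "\<phi> 0 = 0" unfolding \<phi>_def g0 using eq by simp
      ultimately show ?thesis by simp
    qed
    note r = second_deriv_max[OF d d2 mx]
    have "s * (egrad v x \<bullet> y' - c * (egrad u x \<bullet> y')) = 0"
      using r(1) cv(3) cu(3) by (simp add: \<phi>'_def g0)
    then have e1: "egrad v x \<bullet> y' = c * (egrad u x \<bullet> y')" using s by auto
    have ny: "norm y > 0" using False by simp
    have "egrad v x \<bullet> y = norm y * (egrad v x \<bullet> y')" "egrad u x \<bullet> y = norm y * (egrad u x \<bullet> y')"
      using ny by (simp_all add: y'_def)
    then have g1: "egrad v x \<bullet> y = c * (egrad u x \<bullet> y)" using e1 by simp
    have yy: "y \<bullet> y = (norm y)^2" by (simp add: power2_norm_eq_inner)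
    have H: "y \<bullet> (A *v y) = (norm y)^2 * (y' \<bullet> (A *v y'))" for A :: "real^'m^'m"
      using ny by (simp add: y'_def matrix_vector_mult_scaleR power2_eq_square field_simps)
    have "s * ((y \<bullet> (ehess v x *v y) - (egrad v x \<bullet> x) * (y \<bullet> y))
              - c * (y \<bullet> (ehess u x *v y) - (egrad u x \<bullet> x) * (y \<bullet> y)))
        = (norm y)^2 * (s * ((y' \<bullet> (ehess v x *v y') - egrad v x \<bullet> x) - c * (y' \<bullet> (ehess u x *v y') - egrad u x \<bullet> x)))"
      unfolding H yy by (simp add: algebra_simps)
    also have "\<dots> \<le> 0" using r(2) by (simp add: mult_nonneg_nonpos)
    finally show ?thesis using g1 by simp
  qed
  then show "egrad v x \<bullet> y = c * (egrad u x \<bullet> y)"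
    and "s * ((y \<bullet> (ehess v x *v y) - (egrad v x \<bullet> x) * (y \<bullet> y))
              - c * (y \<bullet> (ehess u x *v y) - (egrad u x \<bullet> x) * (y \<bullet> y))) \<le> 0" by auto
qed

lemma Ck2_continuous:
  assumes "Ck_on 2 S f" "open S"
  shows "continuous_on S f"
proof -
  have "\<And>x. x \<in> S \<Longrightarrow> isCont f x"
    using Ck2_D(1)[OF assms(1)] differentiable_imp_continuous_within by blast
  then show ?thesis by (simp add: continuous_at_imp_continuous_on)
qed

lemma key_point:
  fixes u \<phi> v :: "real^'m \<Rightarrow> real" and k :: nat and p q c s :: real and x :: "real^'m"
  assumes k1: "1 \<le> k" and kn: "k \<le> CARD('m) - 1" and pq: "p > q"
    and Su: "Ck_on 2 S u" and Sv: "Ck_on 2 S v" and oS: "open S" and sub: "sphere 0 1 \<subseteq> S"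
    and \<phi>pos: "\<phi> x > 0" and upos: "u x > 0" and cvx: "strictly_sph_convex u"
    and eqn: "Fk k x (bmat u x)
           = u x powr ((p - 1) / k) * ((u x)\<^sup>2 + (norm (sgrad u x))\<^sup>2) powr ((k + 1 - q) / (2 * k))
             * \<phi> x powr (1 / k)"
    and L0: "Lop k p q \<phi> u v x = 0"
    and nx: "norm x = 1" and s: "s = 1 \<or> s = -1"
    and le: "\<And>z. z \<in> sphere 0 1 \<Longrightarrow> s * (v z - c * u z) \<le> 0" and eq: "v x = c * u x"
  shows "s * c \<le> 0"
proof -
  have xS: "x \<in> S" using nx sub by auto
  have xx: "x \<bullet> x = 1" using nx by (metis power2_norm_eq_inner power_one)
  let ?B = "bmat u x" and ?V = "bmat v x"
  define G where "G = ?V - c *\<^sub>R ?B"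
  have V: "?V = c *\<^sub>R ?B + G" by (simp add: G_def)
  note pu = shess_props[OF ehess_sym[OF Su oS xS] nx]
  note pv = shess_props[OF ehess_sym[OF Sv oS xS] nx]
  have symG: "transpose G = G" using pu(1) pv(1) by (simp add: G_def transpose_diff' transpose_scalar)
  have Gx: "G *v x = 0" using pu(2) pv(2)
    by (simp add: G_def matrix_vector_mult_diff_rdistrib scaleR_matrix_vector_assoc[symmetric])
  have Bpos: "\<And>y. y \<bullet> x = 0 \<Longrightarrow> y \<noteq> 0 \<Longrightarrow> y \<bullet> (?B *v y) > 0"
    using cvx nx unfolding strictly_sph_convex_def by auto
  have Gs: "s * (y \<bullet> (G *v y)) \<le> 0" if yx: "y \<bullet> x = 0" for y
  proof -
    have "y \<bullet> (G *v y) = y \<bullet> (?V *v y) - c * (y \<bullet> (?B *v y))"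
      by (simp add: G_def matrix_vector_mult_diff_rdistrib scaleR_matrix_vector_assoc[symmetric] inner_diff_right)
    also have "\<dots> = (y \<bullet> (ehess v x *v y) - (egrad v x \<bullet> x) * (y \<bullet> y))
              - c * (y \<bullet> (ehess u x *v y) - (egrad u x \<bullet> x) * (y \<bullet> y))"
      unfolding pu(3)[OF yx] pv(3)[OF yx] eq by (simp add: algebra_simps)
    finally show ?thesis using extremum(2)[OF Sv Su sub nx s le eq yx] by simp
  qed
  have FS: "s * Flin k x ?B (c *\<^sub>R ?B + G) \<le> s * (c * Fk k x ?B)"
    by (rule FL_sign[OF pu(1) symG pu(2) Gx nx k1 kn Bpos s Gs])
  have sg: "sgrad v x = c *\<^sub>R sgrad u x"
  proof -
    define d where "d = sgrad v x - c *\<^sub>R sgrad u x"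
    have dx: "d \<bullet> x = 0" using xx
      by (simp add: d_def sgrad_def inner_diff_left algebra_simps)
    have "d \<bullet> y = 0" if yx: "y \<bullet> x = 0" for y
    proof -
      have "d \<bullet> y = egrad v x \<bullet> y - c * (egrad u x \<bullet> y)"
        using yx by (simp add: d_def sgrad_def inner_diff_left algebra_simps inner_commute)
      then show ?thesis using extremum(1)[OF Sv Su sub nx s le eq yx] by simp
    qed
    then have "d \<bullet> d = 0" using dx by blast
    then show ?thesis by (simp add: d_def)
  qed
  define a where "a = (p - 1) / real k"
  define c' where "c' = (real k + 1 - q) / real k"
  define U where "U = u x"
  define N where "N = norm (sgrad u x)"
  define R where "R = rho u x"
  define Ph where "Ph = \<phi> x powr (1 / real k)"
  define PU where "PU = U powr a"
  define PR where "PR = R powr c'"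
  have kpos: "real k > 0" using k1 by simp
  have Upos: "U > 0" using upos by (simp add: U_def)
  have Rsq: "R^2 = U^2 + N^2" by (simp add: R_def rho_def U_def N_def)
  have "0 < (u x)^2 + (norm (sgrad u x))^2" using upos by (intro add_pos_nonneg) auto
  then have Rpos: "R > 0" unfolding R_def rho_def by simp
  have Phpos: "Ph > 0" using \<phi>pos by (simp add: Ph_def)
  have PUpos: "PU > 0" using Upos by (simp add: PU_def)
  have PRpos: "PR > 0" using Rpos by (simp add: PR_def)
  have pa1: "U powr (a - 1) = PU / U" using Upos by (simp add: PU_def powr_diff)
  have pa2: "U powr (a + 1) = PU * U" using Upos by (simp add: PU_def powr_add)
  have pr: "R powr (c' - 2) = PR / R^2" using Rpos by (simp add: PR_def powr_diff powr_numeral)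
  have FB: "Fk k x ?B = PU * PR * Ph"
  proof -
    have "R = (U^2 + N^2) powr (1/2)"
      by (simp add: R_def rho_def U_def N_def powr_half_sqrt)
    then have "PR = (U^2 + N^2) powr (c' / 2)" using Rpos
      by (simp add: PR_def powr_powr)
    moreover have "c' / 2 = (real k + 1 - q) / (2 * real k)" by (simp add: c'_def)
    ultimately show ?thesis using eqn by (simp add: U_def N_def PU_def a_def Ph_def add_ac)
  qed
  have "Flin k x ?B ?V = a * U powr (a - 1) * PR * Ph * v x
      + c' * U powr (a + 1) * R powr (c' - 2) * Ph * v x
      + c' * U powr a * R powr (c' - 2) * Ph * (sgrad u x \<bullet> sgrad v x)"
    using L0 unfolding Lop_def a_def c'_def U_def R_def PR_def Ph_def by simp
  also have "\<dots> = (a + c') * c * (PU * PR * Ph)"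
  proof -
    have sgg: "sgrad u x \<bullet> sgrad v x = c * N^2" by (simp add: sg N_def power2_norm_eq_inner)
    have vx: "v x = c * U" by (simp add: eq U_def)
    have one: "(U^2 + N^2) / R^2 = 1" using Rsq Rpos by (simp flip: Rsq)
    have "a * (PU / U) * PR * Ph * (c * U) + c' * (PU * U) * (PR / R^2) * Ph * (c * U)
        + c' * PU * (PR / R^2) * Ph * (c * N^2)
        = a * c * (PU * PR * Ph) + c' * c * (PU * PR * Ph) * ((U^2 + N^2) / R^2)"
      using Upos Rpos by (simp add: field_simps power2_eq_square)
    then show ?thesis
      unfolding pa1 pa2 pr sgg vx PU_def[symmetric] one by (simp add: algebra_simps)
  qed
  finally have FV: "Flin k x ?B ?V = (a + c') * c * (PU * PR * Ph)" .
  have "s * ((a + c') * c * (PU * PR * Ph)) \<le> s * (c * (PU * PR * Ph))"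
    using FS unfolding V[symmetric] FV FB .
  then have "(s * c) * ((a + c' - 1) * (PU * PR * Ph)) \<le> 0" by (simp add: algebra_simps)
  moreover have "a + c' - 1 > 0" using pq kpos by (simp add: a_def c'_def field_simps)
  moreover have "PU * PR * Ph > 0" using PUpos PRpos Phpos by simp
  ultimately have "(s * c) * ((a + c' - 1) * (PU * PR * Ph)) \<le> 0 * ((a + c' - 1) * (PU * PR * Ph))"
    and "(a + c' - 1) * (PU * PR * Ph) > 0" by simp_all
  then show ?thesis using mult_le_cancel_right_pos by blast
qed

theorem mainTheorem8:
  fixes u \<phi> v :: "real^'m \<Rightarrow> real" and k :: nat and p q :: real
  assumes "1 \<le> k" and "k \<le> CARD('m) - 1"
    and "p > q"
    and "smooth_sphere \<phi>" and "\<forall>x \<in> sphere 0 1. \<phi> x > 0"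
    and "smooth_sphere u" and "\<forall>x \<in> sphere 0 1. u x > 0"
    and "strictly_sph_convex u"
    and "\<forall>x \<in> sphere 0 1. Fk k x (bmat u x)
           = u x powr ((p - 1) / k) * ((u x)\<^sup>2 + (norm (sgrad u x))\<^sup>2) powr ((k + 1 - q) / (2 * k))
             * \<phi> x powr (1 / k)"
    and "Ck_sphere 2 v"
    and "\<forall>x \<in> sphere 0 1. Lop k p q \<phi> u v x = 0"
  shows "\<forall>x \<in> sphere 0 1. v x = 0"
proof -
  note k1 = assms(1) and kn = assms(2) and pq = assms(3) and \<phi>pos = assms(5)
    and upos = assms(7) and cvx = assms(8) and eqn = assms(9) and L0 = assms(11)
  obtain Su where Su: "open Su" "sphere 0 1 \<subseteq> Su" "smooth_on Su u"
    using assms(6) unfolding smooth_sphere_def by blast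
  obtain Sv where Sv: "open Sv" "sphere 0 1 \<subseteq> Sv" "Ck_on 2 Sv v"
    using assms(10) unfolding Ck_sphere_def by blast
  define S where "S = Su \<inter> Sv"
  have oS: "open S" using Su Sv by (simp add: S_def open_Int)
  have sub: "sphere 0 1 \<subseteq> S" using Su Sv by (simp add: S_def)
  have CSu: "Ck_on 2 S u" using Su(3) unfolding smooth_on_def S_def by (blast intro: Ck_on_subset)
  have CSv: "Ck_on 2 S v" using Sv(3) unfolding S_def by (blast intro: Ck_on_subset)
  let ?w = "\<lambda>z. v z / u z"
  have cw: "continuous_on (sphere 0 1) ?w"
  proof (rule continuous_on_divide)
    show "continuous_on (sphere 0 1) v" using Ck2_continuous[OF CSv oS] sub continuous_on_subset by blast
    show "continuous_on (sphere 0 1) u" using Ck2_continuous[OF CSu oS] sub continuous_on_subset by blast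
    show "\<forall>x\<in>sphere 0 1. u x \<noteq> 0" using upos by auto
  qed
  have ne: "sphere (0::real^'m) 1 \<noteq> {}" by simp
  obtain x0 where x0: "x0 \<in> sphere 0 1" "\<And>z. z \<in> sphere 0 1 \<Longrightarrow> ?w z \<le> ?w x0"
    using continuous_attains_sup[OF compact_sphere ne cw] by blast
  obtain x1 where x1: "x1 \<in> sphere 0 1" "\<And>z. z \<in> sphere 0 1 \<Longrightarrow> ?w x1 \<le> ?w z"
    using continuous_attains_inf[OF compact_sphere ne cw] by blast
  have vw: "v z = ?w z * u z" if "z \<in> sphere 0 1" for z
  proof -
    have "u z > 0" using upos that by blast
    then show ?thesis by simp
  qed
  have c0: "1 * ?w x0 \<le> 0"
  proof (rule key_point[OF k1 kn pq CSu CSv oS sub _ _ cvx _ _ _ _])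
    show "\<phi> x0 > 0" "u x0 > 0" using \<phi>pos upos x0 by auto
    show "Fk k x0 (bmat u x0) = u x0 powr ((p - 1) / k) * ((u x0)\<^sup>2 + (norm (sgrad u x0))\<^sup>2) powr ((k + 1 - q) / (2 * k))
             * \<phi> x0 powr (1 / k)" using eqn x0 by blast
    show "Lop k p q \<phi> u v x0 = 0" using L0 x0 by blast
    show "norm x0 = 1" using x0 by simp
    show "(1::real) = 1 \<or> (1::real) = -1" by simp
    show "1 * (v z - ?w x0 * u z) \<le> 0" if "z \<in> sphere 0 1" for z
    proof -
      have "v z - ?w x0 * u z = (?w z - ?w x0) * u z" using vw[OF that] by (simp add: algebra_simps)
      also have "\<dots> \<le> 0" using x0(2)[OF that] upos that by (simp add: mult_nonpos_nonneg less_imp_le)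
      finally show ?thesis by simp
    qed
    show "v x0 = ?w x0 * u x0" using vw x0 by blast
  qed
  have c1: "(-1) * ?w x1 \<le> 0"
  proof (rule key_point[OF k1 kn pq CSu CSv oS sub _ _ cvx _ _ _ _])
    show "\<phi> x1 > 0" "u x1 > 0" using \<phi>pos upos x1 by auto
    show "Fk k x1 (bmat u x1) = u x1 powr ((p - 1) / k) * ((u x1)\<^sup>2 + (norm (sgrad u x1))\<^sup>2) powr ((k + 1 - q) / (2 * k))
             * \<phi> x1 powr (1 / k)" using eqn x1 by blast
    show "Lop k p q \<phi> u v x1 = 0" using L0 x1 by blast
    show "norm x1 = 1" using x1 by simp
    show "(-1::real) = 1 \<or> (-1::real) = -1" by simp
    show "(-1) * (v z - ?w x1 * u z) \<le> 0" if "z \<in> sphere 0 1" for z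
    proof -
      have "v z - ?w x1 * u z = (?w z - ?w x1) * u z" using vw[OF that] by (simp add: algebra_simps)
      also have "\<dots> \<ge> 0" using x1(2)[OF that] upos that by (simp add: less_imp_le)
      finally show ?thesis by simp
    qed
    show "v x1 = ?w x1 * u x1" using vw x1 by blast
  qed
  show ?thesis
  proof
    fix z assume z: "z \<in> sphere (0::real^'m) 1"
    have "?w z \<le> 0" using x0(2)[OF z] c0 by simp
    moreover have "?w z \<ge> 0" using x1(2)[OF z] c1 by simp
    ultimately have "?w z = 0" by simp
    moreover have "u z > 0" using upos z by blast
    ultimately show "v z = 0" by simp
  qed
qed

end
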